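(* Let $G$ be a discrete-time LTI system with $m$ inputs and $p$ outputs whose minimal realizations have state dimension $n$. Let $L\ge n$ and $\xi\in\mathbb{N}$, $\xi\ge1$, be integers, and set $\tilde L=\xi L+(1-\xi)n$. Suppose $\{u_k,y_k\}_{k=0}^{N-1}$ is a trajectory of $G$ and $u$ is persistently exciting of order $L+n$. Then $\{\bar u_k,\bar y_k\}_{k=0}^{\tilde L-1}$ is a trajectory of $G$ if and only if there exist $\alpha^1,\dots,\alpha^\xi\in\mathbb{R}^{N-L+1}$ such that $$\begin{bmatrix}H_L(u)&0\\0&I_{\xi-1}\otimes H_{L-n}(u_{[n,N-1]})\\ H_L(y)&0\\0&I_{\xi-1}\otimes H_{L-n}(y_{[n,N-1]})\end{bmatrix}\begin{bmatrix}\alpha^1\\ \vdots\\ \alpha^\xi\end{bmatrix}=\begin{bmatrix}\bar u_{[0,\tilde L-1]}\\ \bar y_{[0,\tilde L-1]}\end{bmatrix}$$ and, for all $i\in\{1,\dots,\xi-1\}$, $$H_n(u_{[L-n,N-1]})\alpha^i=H_n(u_{[0,N-L+n-1]})\alpha^{i+1},\qquad H_n(y_{[L-n,N-1]})\alpha^i=H_n(y_{[0,N-L+n-1]})\alpha^{i+1}.$$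
   Context: For a sequence $\{x_k\}_{k=0}^{N-1}$ with $x_k\in\mathbb{R}^d$ and $1\le L\le N$, the Hankel matrix $H_L(x)\in\mathbb{R}^{dL\times(N-L+1)}$ is the matrix whose $(i,j)$ block (block rows $i=0,\dots,L-1$, columns $j=0,\dots,N-L$) is $x_{i+j}$. For $a\le b$, $x_{[a,b]}$ denotes the stacked vector $(x_a^\top,\dots,x_b^\top)^\top$; when used as the argument of a Hankel matrix, $x_{[a,b]}$ denotes the subsequence $\{x_{a+k}\}_{k=0}^{b-a}$, so that e.g. $H_{L-n}(u_{[n,N-1]})$, $H_n(u_{[L-n,N-1]})$ and $H_n(u_{[0,N-L+n-1]})$ all have $N-L+1$ columns. $\otimes$ is the Kronecker product and $I_{\xi-1}$ the identity of size $\xi-1$ (the corresponding block is absent if $\xi=1$). A sequence $x$ with $x_k\in\mathbb{R}^d$ is persistently exciting of order $L$ if $\operatorname{rank}H_L(x)=dL$. An input-output sequence $\{u_k,y_k\}_{k=0}^{N-1}$ is a trajectory of $G$ if for a minimal realization $(A,B,C,D)$ of $G$ there exist $\bar x\in\mathbb{R}^n$ and states $\{x_k\}_{k=0}^N$ with $x_0=\bar x$, $x_{k+1}=Ax_k+Bu_k$, $y_k=Cx_k+Du_k$ for $k=0,\dots,N-1$. *)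

theory Defs
  imports "Jordan_Normal_Form.DL_Rank"
begin

definition mrank :: "real mat \<Rightarrow> nat" where
  "mrank M = vec_space.rank (dim_row M) M"

text \<open>Kalman controllability matrix [B, AB, ..., A^(n-1) B] and observability
  matrix [C; CA; ...; CA^(n-1)] for A n x n, B n x m, C p x n.\<close>
definition ctrb_mat :: "nat \<Rightarrow> nat \<Rightarrow> real mat \<Rightarrow> real mat \<Rightarrow> real mat" where
  "ctrb_mat n m A B = mat n (n * m) (\<lambda>(i,j). ((A ^\<^sub>m (j div m)) * B) $$ (i, j mod m))"

definition obsv_mat :: "nat \<Rightarrow> nat \<Rightarrow> real mat \<Rightarrow> real mat \<Rightarrow> real mat" where
  "obsv_mat n p A C = mat (n * p) n (\<lambda>(i,j). (C * (A ^\<^sub>m (i div p))) $$ (i mod p, j))"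

definition minimal_realization ::
  "nat \<Rightarrow> nat \<Rightarrow> nat \<Rightarrow> real mat \<Rightarrow> real mat \<Rightarrow> real mat \<Rightarrow> real mat \<Rightarrow> bool" where
  "minimal_realization n m p A B C D \<longleftrightarrow>
     A \<in> carrier_mat n n \<and> B \<in> carrier_mat n m \<and> C \<in> carrier_mat p n \<and> D \<in> carrier_mat p m \<and>
     mrank (ctrb_mat n m A B) = n \<and> mrank (obsv_mat n p A C) = n"

definition is_trajectory ::
  "nat \<Rightarrow> nat \<Rightarrow> nat \<Rightarrow> real mat \<Rightarrow> real mat \<Rightarrow> real mat \<Rightarrow> real mat
   \<Rightarrow> nat \<Rightarrow> (nat \<Rightarrow> real vec) \<Rightarrow> (nat \<Rightarrow> real vec) \<Rightarrow> bool" where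
  "is_trajectory n m p A B C D N u y \<longleftrightarrow>
     (\<forall>k<N. u k \<in> carrier_vec m \<and> y k \<in> carrier_vec p) \<and>
     (\<exists>x :: nat \<Rightarrow> real vec. x 0 \<in> carrier_vec n \<and>
        (\<forall>k<N. x (Suc k) = A *\<^sub>v x k + B *\<^sub>v u k \<and> y k = C *\<^sub>v x k + D *\<^sub>v u k))"

text \<open>Hankel matrix H_L(x) of depth L of the sequence {x_k}_{k=0}^{Nx-1}, x_k in R^d.
  Block (i,j) is x_{i+j}.\<close>
definition hankel :: "nat \<Rightarrow> nat \<Rightarrow> nat \<Rightarrow> (nat \<Rightarrow> real vec) \<Rightarrow> real mat" where
  "hankel d L Nx x = mat (d * L) (Nx - L + 1) (\<lambda>(i,j). x (i div d + j) $ (i mod d))"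

definition subseq :: "(nat \<Rightarrow> real vec) \<Rightarrow> nat \<Rightarrow> nat \<Rightarrow> real vec" where
  "subseq x a k = x (a + k)"

text \<open>Stacked vector x_[a,b] (components x_a, ..., x_b, each in R^d).\<close>
definition stack :: "nat \<Rightarrow> (nat \<Rightarrow> real vec) \<Rightarrow> nat \<Rightarrow> nat \<Rightarrow> real vec" where
  "stack d x a b = vec (d * (b + 1 - a)) (\<lambda>i. x (a + i div d) $ (i mod d))"

definition persistently_exciting :: "nat \<Rightarrow> nat \<Rightarrow> (nat \<Rightarrow> real vec) \<Rightarrow> nat \<Rightarrow> bool" where
  "persistently_exciting d Nx x L \<longleftrightarrow> mrank (hankel d L Nx x) = d * L"

text \<open>Kronecker product I_k \<otimes> M (block diagonal with k copies of M; empty if k = 0).\<close>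
definition kron_id :: "nat \<Rightarrow> real mat \<Rightarrow> real mat" where
  "kron_id k M = diag_block_mat (replicate k M)"

definition vstack :: "real mat \<Rightarrow> real mat \<Rightarrow> real mat" where
  "vstack X Y = four_block_mat X (0\<^sub>m (dim_row X) 0) Y (0\<^sub>m (dim_row Y) 0)"

definition bdiag :: "real mat \<Rightarrow> real mat \<Rightarrow> real mat" where
  "bdiag X Y = four_block_mat X (0\<^sub>m (dim_row X) (dim_col Y)) (0\<^sub>m (dim_row Y) (dim_col X)) Y"

definition stack_vecs :: "(nat \<Rightarrow> real vec) \<Rightarrow> nat \<Rightarrow> real vec" where
  "stack_vecs \<alpha> xi = foldr (@\<^sub>v) (map \<alpha> [1..<xi+1]) (vec 0 (\<lambda>_. 0))"

end

theory Submission
  imports Defs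
begin

lemma mrank_col_inj:
  fixes M :: "real mat"
  assumes M: "M \<in> carrier_mat nr nc" and r: "mrank M = nc" and z: "z \<in> carrier_vec nc"
    and Mz: "M *\<^sub>v z = 0\<^sub>v nr"
  shows "z = 0\<^sub>v nc"
proof (rule ccontr)
  interpret V: vec_space "TYPE(real)" nr .
  assume nz: "z \<noteq> 0\<^sub>v nc"
  have rk: "V.rank M = nc" using r M unfolding mrank_def by auto
  show False
  proof (cases "distinct (cols M)")
    case True
    have "V.lin_indpt (set (cols M))" using V.full_rank_lin_indpt[OF M rk True] .
    moreover have "V.lin_dep (set (cols M))" using V.lin_depI[OF M z nz Mz True] .
    ultimately show False by simp
  next
    case False
    obtain S where S: "maximal S (\<lambda>T. T \<subseteq> set (cols M) \<and> V.lin_indpt T)"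
      using maximal_exists[of "(\<lambda>T. T \<subseteq> set (cols M) \<and> V.lin_indpt T)" "card (set (cols M))" "{}"]
      by (meson List.finite_set card_mono empty_iff empty_subsetI V.finite_lin_indpt2 rev_finite_subset)
    have "card S \<le> card (set (cols M))" using S by (simp add: card_mono maximal_def)
    also have "\<dots> < length (cols M)" using False card_distinct card_length le_neq_implies_less by blast
    finally have "card S < nc" using M by simp
    moreover have "V.rank M = card S" using V.rank_card_indpt[OF M S] .
    ultimately show False using rk by simp
  qed
qed

lemma mrank_row_surj:
  fixes M :: "real mat"
  assumes M: "M \<in> carrier_mat nr nc" and r: "mrank M = nr" and b: "b \<in> carrier_vec nr"
  shows "\<exists>z\<in>carrier_vec nc. M *\<^sub>v z = b"
proof -
  interpret V: vec_space "TYPE(real)" nr .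
  have rk: "V.rank M = nr" using r M unfolding mrank_def by auto
  obtain S where S: "maximal S (\<lambda>T. T \<subseteq> set (cols M) \<and> V.lin_indpt T)"
    using maximal_exists[of "(\<lambda>T. T \<subseteq> set (cols M) \<and> V.lin_indpt T)" "card (set (cols M))" "{}"]
    by (meson List.finite_set card_mono empty_iff empty_subsetI V.finite_lin_indpt2 rev_finite_subset)
  have cS: "card S = nr" using V.rank_card_indpt[OF M S] rk by simp
  have Ssub: "S \<subseteq> set (cols M)" "V.lin_indpt S" using S unfolding maximal_def by auto
  have colsC: "set (cols M) \<subseteq> carrier_vec nr" using M cols_dim by blast
  have fS: "finite S" using Ssub(1) finite_subset by blast
  have "V.basis S"
    by (rule V.dim_li_is_basis) (use fS Ssub colsC cS V.dim_is_n in auto)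
  hence "V.span S = carrier_vec nr" unfolding V.basis_def by simp
  moreover have "V.span S \<subseteq> V.span (set (cols M))"
    by (rule V.span_is_monotone[OF Ssub(1)])
  ultimately have "b \<in> V.span (set (cols M))" using b by auto
  hence "b \<in> V.span_list (cols M)" using V.span_list_as_span[OF colsC] by simp
  then obtain c where bc: "b = V.lincomb_list c (cols M)" by (auto elim: V.in_span_listE)
  have "V.lincomb_list c (cols M) = mat_of_cols nr (cols M) *\<^sub>v vec (length (cols M)) c"
    by (rule V.lincomb_list_as_mat_mult) (use colsC in auto)
  also have "mat_of_cols nr (cols M) = M" using M mat_of_cols_cols[of M] by simp
  finally show ?thesis using bc M by (intro bexI[of _ "vec (length (cols M)) c"]) auto
qed

lemma sum_sq_zero_vec:
  fixes w :: "real vec"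
  assumes w: "w \<in> carrier_vec nr" and s: "(\<Sum>i<nr. w $ i * w $ i) = 0"
  shows "w = 0\<^sub>v nr"
proof (rule eq_vecI)
  fix i assume i: "i < dim_vec (0\<^sub>v nr :: real vec)"
  have "\<forall>i\<in>{..<nr}. w $ i * w $ i = 0"
    using sum_nonneg_eq_0_iff[of "{..<nr}" "\<lambda>i. w $ i * w $ i"] s by simp
  thus "w $ i = 0\<^sub>v nr $ i" using i by simp
qed (use w in auto)

lemma mrank_row_leftker:
  fixes M :: "real mat"
  assumes M: "M \<in> carrier_mat nr nc" and r: "mrank M = nr" and w: "w \<in> carrier_vec nr"
    and k: "\<forall>j<nc. (\<Sum>i<nr. w $ i * M $$ (i, j)) = 0"
  shows "w = 0\<^sub>v nr"
proof -
  obtain z where z: "z \<in> carrier_vec nc" "M *\<^sub>v z = w" using mrank_row_surj[OF M r w] by blast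
  have "(\<Sum>i<nr. w $ i * w $ i) = (\<Sum>i<nr. w $ i * (\<Sum>j<nc. M $$ (i, j) * z $ j))"
    using z M by (intro sum.cong refl) (auto simp: mult_mat_vec_def scalar_prod_def row_def atLeast0LessThan)
  also have "\<dots> = (\<Sum>j<nc. z $ j * (\<Sum>i<nr. w $ i * M $$ (i, j)))"
    by (simp add: sum_distrib_left sum_distrib_right mult_ac sum.swap[of _ "{..<nr}"])
  also have "\<dots> = 0" using k by simp
  finally show ?thesis by (rule sum_sq_zero_vec[OF w])
qed

lemma leftker_surj:
  fixes M :: "real mat"
  assumes M: "M \<in> carrier_mat nr nc"
    and lk: "\<And>w. w \<in> carrier_vec nr \<Longrightarrow> (\<forall>j<nc. (\<Sum>i<nr. w $ i * M $$ (i, j)) = 0) \<Longrightarrow> w = 0\<^sub>v nr"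
    and b: "b \<in> carrier_vec nr"
  shows "\<exists>z\<in>carrier_vec nc. M *\<^sub>v z = b"
proof -
  define G where "G = M * transpose_mat M"
  have G: "G \<in> carrier_mat nr nr" using M by (simp add: G_def)
  have detG: "det G \<noteq> 0"
  proof
    assume "det G = 0"
    then obtain v where v: "v \<in> carrier_vec nr" "v \<noteq> 0\<^sub>v nr" "G *\<^sub>v v = 0\<^sub>v nr"
      using det_0_iff_vec_prod_zero_field[OF G] by blast
    define t where "t = transpose_mat M *\<^sub>v v"
    have t: "t \<in> carrier_vec nc" using M v(1) by (simp add: t_def)
    have MT: "transpose_mat M \<in> carrier_mat nc nr" using M by simp
    have Mt: "M *\<^sub>v t = 0\<^sub>v nr" using v(3) assoc_mult_mat_vec[OF M MT v(1)]
      unfolding t_def G_def by simp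
    have "t \<bullet> t = v \<bullet> (M *\<^sub>v t)"
      using transpose_vec_mult_scalar[OF M t v(1)] unfolding t_def[symmetric] .
    also have "\<dots> = 0" using Mt v by simp
    finally have tt: "t \<bullet> t = 0" .
    have dt: "dim_vec t = nc" using t by auto
    have "(\<Sum>i<nc. t $ i * t $ i) = t \<bullet> t" unfolding scalar_prod_def dt atLeast0LessThan ..
    hence "t = 0\<^sub>v nc" using tt sum_sq_zero_vec[OF t] by simp
    have "\<forall>j<nc. (\<Sum>i<nr. v $ i * M $$ (i, j)) = 0"
    proof (intro allI impI)
      fix j assume j: "j < nc"
      have "t $ j = 0" using \<open>t = 0\<^sub>v nc\<close> j by simp
      moreover have "t $ j = (\<Sum>i<nr. v $ i * M $$ (i, j))"
      proof -
        have dM: "dim_row M = nr" "dim_col M = nc" using M by auto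
        have dv: "dim_vec v = nr" using v by auto
        have "t $ j = row (transpose_mat M) j \<bullet> v" unfolding t_def using dM j by simp
        also have "\<dots> = col M j \<bullet> v" using dM j by simp
        also have "\<dots> = (\<Sum>i<nr. M $$ (i, j) * v $ i)"
          unfolding scalar_prod_def dv atLeast0LessThan using dM j by (intro sum.cong) auto
        finally show ?thesis by (simp add: mult.commute)
      qed
      ultimately show "(\<Sum>i<nr. v $ i * M $$ (i, j)) = 0" by simp
    qed
    with lk[OF v(1)] v(2) show False by simp
  qed
  have "G \<in> Units (ring_mat TYPE(real) nr undefined)" by (rule det_non_zero_imp_unit[OF G detG])
  then obtain G' where G': "G' \<in> carrier_mat nr nr" "G * G' = 1\<^sub>m nr"
    unfolding Units_def by (auto simp: ring_mat_simps)
  define z where "z = transpose_mat M *\<^sub>v (G' *\<^sub>v b)"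
  have MT: "transpose_mat M \<in> carrier_mat nc nr" using M by simp
  have "(G * G') *\<^sub>v b = G *\<^sub>v (G' *\<^sub>v b)" using assoc_mult_mat_vec[OF G G'(1) b] .
  also have "\<dots> = M *\<^sub>v z" unfolding z_def G_def
    using assoc_mult_mat_vec[OF M MT, of "G' *\<^sub>v b"] G'(1) b by simp
  finally have "M *\<^sub>v z = (G * G') *\<^sub>v b" by simp
  also have "\<dots> = b" using G' b by simp
  finally show ?thesis using M G' b by (intro bexI[of _ z]) (auto simp: z_def)
qed

lemma dep_exists:
  fixes M :: "real mat"
  assumes M: "M \<in> carrier_mat nr nc" and lt: "nr < nc"
  shows "\<exists>z\<in>carrier_vec nc. z \<noteq> 0\<^sub>v nc \<and> M *\<^sub>v z = 0\<^sub>v nr"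
proof (cases "distinct (cols M)")
  case True
  interpret V: vec_space "TYPE(real)" nr .
  have colsC: "set (cols M) \<subseteq> carrier_vec nr" using M cols_dim by blast
  have "\<not> V.lin_indpt (set (cols M))"
  proof
    assume li: "V.lin_indpt (set (cols M))"
    have "card (set (cols M)) \<le> V.dim" using V.li_le_dim(2)[OF V.fin_dim _ li] colsC by simp
    moreover have "card (set (cols M)) = nc" using True distinct_card M by fastforce
    ultimately show False using lt V.dim_is_n by simp
  qed
  then obtain v where "v \<in> carrier_vec nc" "v \<noteq> 0\<^sub>v nc" "M *\<^sub>v v = 0\<^sub>v nr"
    using V.lin_depE[OF M _ True] by blast
  thus ?thesis by blast
next
  case False
  have lc: "length (cols M) = nc" using M by simp
  obtain i j where ij: "i < nc" "j < nc" "i \<noteq> j" "cols M ! i = cols M ! j"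
    using False lc unfolding distinct_conv_nth by auto
  define z :: "real vec" where "z = vec nc (\<lambda>k. if k = i then 1 else if k = j then -1 else 0)"
  have z: "z \<in> carrier_vec nc" by (simp add: z_def)
  have "z \<noteq> 0\<^sub>v nc"
  proof
    assume "z = 0\<^sub>v nc" hence "z $ i = 0" using ij by simp
    thus False using ij by (simp add: z_def)
  qed
  moreover have "M *\<^sub>v z = 0\<^sub>v nr"
  proof (rule eq_vecI)
    fix r assume r: "r < dim_vec (0\<^sub>v nr :: real vec)"
    hence r': "r < nr" by simp
    have c1: "col M i $ r = M $$ (r,i)" "col M j $ r = M $$ (r,j)" using M r' ij(1,2) by auto
    have "col M i = col M j" using ij M by simp
    hence colij: "M $$ (r, i) = M $$ (r, j)" using c1 by simp
    have "(M *\<^sub>v z) $ r = (\<Sum>k\<in>{0..<nc}. M $$ (r, k) * z $ k)"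
      using M r' by (simp add: scalar_prod_def z_def)
    also have "\<dots> = (\<Sum>k\<in>{0..<nc}. (if k = i then M $$ (r, i) else 0) + (if k = j then - M $$ (r, j) else 0))"
      using ij by (intro sum.cong) (auto simp: z_def)
    also have "\<dots> = 0" using ij colij by (simp add: sum.distrib)
    finally show "(M *\<^sub>v z) $ r = 0\<^sub>v nr $ r" using r' by simp
  qed (use M in simp)
  ultimately show ?thesis using z by blast
qed

lemma ann_rel:
  fixes A :: "real mat" and \<xi> :: "real vec"
  assumes A: "A \<in> carrier_mat n n" and xi: "\<xi> \<in> carrier_vec n"
  shows "\<exists>d\<le>n. \<exists>c. \<forall>w\<in>carrier_vec n. \<xi> \<bullet> (A ^\<^sub>m d *\<^sub>v w) = (\<Sum>k<d. c k * (\<xi> \<bullet> (A ^\<^sub>m k *\<^sub>v w)))"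
proof -
  define Q where "Q = mat n (Suc n) (\<lambda>(r,k). (transpose_mat (A ^\<^sub>m k) *\<^sub>v \<xi>) $ r)"
  have Q: "Q \<in> carrier_mat n (Suc n)" by (simp add: Q_def)
  obtain z where z: "z \<in> carrier_vec (Suc n)" "z \<noteq> 0\<^sub>v (Suc n)" "Q *\<^sub>v z = 0\<^sub>v n"
    using dep_exists[OF Q] by auto
  have key: "(\<Sum>k<Suc n. z $ k * (\<xi> \<bullet> (A ^\<^sub>m k *\<^sub>v w))) = 0" if w: "w \<in> carrier_vec n" for w
  proof -
    have Ak: "A ^\<^sub>m k \<in> carrier_mat n n" for k using A by simp
    have e1: "\<xi> \<bullet> (A ^\<^sub>m k *\<^sub>v w) = (\<Sum>r<n. Q $$ (r, k) * w $ r)" if k: "k < Suc n" for k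
    proof -
      have "\<xi> \<bullet> (A ^\<^sub>m k *\<^sub>v w) = (transpose_mat (A ^\<^sub>m k) *\<^sub>v \<xi>) \<bullet> w"
        using transpose_vec_mult_scalar[OF Ak w xi] by simp
      also have "\<dots> = (\<Sum>r<n. Q $$ (r, k) * w $ r)"
        using w k A unfolding scalar_prod_def[of _ w] Q_def
        by (intro sum.cong) (auto simp: atLeast0LessThan)
      finally show ?thesis .
    qed
    have e2: "(\<Sum>k<Suc n. Q $$ (r, k) * z $ k) = 0" if r: "r < n" for r
    proof -
      have "(Q *\<^sub>v z) $ r = 0" using z(3) r by simp
      moreover have "(Q *\<^sub>v z) $ r = (\<Sum>k<Suc n. Q $$ (r, k) * z $ k)"
        using Q r z(1) by (auto simp: scalar_prod_def atLeast0LessThan row_def intro!: sum.cong)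
      ultimately show ?thesis by simp
    qed
    have "(\<Sum>k<Suc n. z $ k * (\<xi> \<bullet> (A ^\<^sub>m k *\<^sub>v w))) = (\<Sum>k<Suc n. z $ k * (\<Sum>r<n. Q $$ (r, k) * w $ r))"
      using e1 by simp
    also have "\<dots> = (\<Sum>k<Suc n. \<Sum>r<n. w $ r * (Q $$ (r, k) * z $ k))"
      by (simp add: sum_distrib_left mult_ac del: sum.lessThan_Suc)
    also have "\<dots> = (\<Sum>r<n. \<Sum>k<Suc n. w $ r * (Q $$ (r, k) * z $ k))" by (rule sum.swap)
    also have "\<dots> = (\<Sum>r<n. w $ r * (\<Sum>k<Suc n. Q $$ (r, k) * z $ k))"
      by (simp add: sum_distrib_left del: sum.lessThan_Suc)
    also have "\<dots> = 0" using e2 by simp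
    finally show ?thesis .
  qed
  define D where "D = {k. k < Suc n \<and> z $ k \<noteq> 0}"
  have fD: "finite D" unfolding D_def by simp
  have neD: "D \<noteq> {}"
  proof
    assume "D = {}"
    hence "z = 0\<^sub>v (Suc n)" using z(1) unfolding D_def by (intro eq_vecI) auto
    with z(2) show False by simp
  qed
  define d where "d = Max D"
  have dD: "d \<in> D" using fD neD d_def Max_in by blast
  have dn: "d \<le> n" using dD D_def by simp
  have zd: "z $ d \<noteq> 0" using dD D_def by simp
  have above: "z $ k = 0" if "d < k" "k < Suc n" for k
  proof (rule ccontr)
    assume "z $ k \<noteq> 0"
    hence "k \<in> D" using that D_def by simp
    hence "k \<le> d" using Max_ge[OF fD] d_def by simp
    thus False using that by simp
  qed
  define c where "c k = - z $ k / z $ d" for k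
  have "\<forall>w\<in>carrier_vec n. \<xi> \<bullet> (A ^\<^sub>m d *\<^sub>v w) = (\<Sum>k<d. c k * (\<xi> \<bullet> (A ^\<^sub>m k *\<^sub>v w)))"
  proof
    fix w :: "real vec" assume w: "w \<in> carrier_vec n"
    let ?f = "\<lambda>k. z $ k * (\<xi> \<bullet> (A ^\<^sub>m k *\<^sub>v w))"
    have "(\<Sum>k<Suc n. ?f k) = (\<Sum>k<Suc d. ?f k)"
      using dn above by (intro sum.mono_neutral_right) auto
    also have "\<dots> = ?f d + (\<Sum>k<d. ?f k)" by simp
    finally have "?f d + (\<Sum>k<d. ?f k) = 0" using key[OF w] by simp
    hence "\<xi> \<bullet> (A ^\<^sub>m d *\<^sub>v w) = - (\<Sum>k<d. ?f k) / z $ d" using zd by (simp add: field_simps)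
    also have "\<dots> = (\<Sum>k<d. c k * (\<xi> \<bullet> (A ^\<^sub>m k *\<^sub>v w)))"
      unfolding c_def by (simp add: sum_divide_distrib sum_negf[symmetric])
    finally show "\<xi> \<bullet> (A ^\<^sub>m d *\<^sub>v w) = (\<Sum>k<d. c k * (\<xi> \<bullet> (A ^\<^sub>m k *\<^sub>v w)))" .
  qed
  thus ?thesis using dn by blast
qed

definition lc :: "nat \<Rightarrow> nat \<Rightarrow> real vec \<Rightarrow> (nat \<Rightarrow> real vec) \<Rightarrow> nat \<Rightarrow> real vec" where
  "lc d K a f k = vec d (\<lambda>r. \<Sum>j<K. a $ j * f (k + j) $ r)"

lemma lc_carrier[simp]: "lc d K a f k \<in> carrier_vec d" and lc_dim[simp]: "dim_vec (lc d K a f k) = d"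
  by (auto simp: lc_def)

lemma lc_index[simp]: "r < d \<Longrightarrow> lc d K a f k $ r = (\<Sum>j<K. a $ j * f (k + j) $ r)"
  by (simp add: lc_def)

lemma lc_mat:
  fixes A :: "real mat"
  assumes A: "A \<in> carrier_mat r c" and f: "\<forall>j<K. f (k + j) \<in> carrier_vec c"
  shows "A *\<^sub>v lc c K a f k = lc r K a (\<lambda>i. A *\<^sub>v f i) k"
proof (rule eq_vecI)
  fix i assume "i < dim_vec (lc r K a (\<lambda>i. A *\<^sub>v f i) k)"
  hence i: "i < r" by simp
  have "(A *\<^sub>v lc c K a f k) $ i = (\<Sum>l<c. A $$ (i, l) * (\<Sum>j<K. a $ j * f (k + j) $ l))"
    using A i by (simp add: scalar_prod_def atLeast0LessThan)
  also have "\<dots> = (\<Sum>l<c. \<Sum>j<K. a $ j * (A $$ (i, l) * f (k + j) $ l))"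
    by (simp add: sum_distrib_left mult_ac)
  also have "\<dots> = (\<Sum>j<K. \<Sum>l<c. a $ j * (A $$ (i, l) * f (k + j) $ l))" by (rule sum.swap)
  also have "\<dots> = (\<Sum>j<K. a $ j * (A *\<^sub>v f (k + j)) $ i)"
  proof (intro sum.cong refl)
    fix j assume j: "j \<in> {..<K}"
    have d: "dim_vec (f (k + j)) = c" using f j by auto
    show "(\<Sum>l<c. a $ j * (A $$ (i, l) * f (k + j) $ l)) = a $ j * (A *\<^sub>v f (k + j)) $ i"
      using A i d by (simp add: scalar_prod_def atLeast0LessThan sum_distrib_left)
  qed
  also have "\<dots> = lc r K a (\<lambda>i. A *\<^sub>v f i) k $ i" using i by simp
  finally show "(A *\<^sub>v lc c K a f k) $ i = lc r K a (\<lambda>i. A *\<^sub>v f i) k $ i" .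
qed (use A in simp)

lemma lc_add:
  assumes "\<forall>j<K. f (k + j) \<in> carrier_vec d \<and> g (k + j) \<in> carrier_vec d"
  shows "lc d K a (\<lambda>i. f i + g i) k = lc d K a f k + lc d K a g k"
proof (rule eq_vecI)
  fix r assume "r < dim_vec (lc d K a f k + lc d K a g k)"
  hence r: "r < d" by simp
  have "lc d K a (\<lambda>i. f i + g i) k $ r = (\<Sum>j<K. a $ j * (f (k + j) + g (k + j)) $ r)"
    using r by simp
  also have "\<dots> = (\<Sum>j<K. a $ j * f (k + j) $ r + a $ j * g (k + j) $ r)"
  proof (intro sum.cong refl)
    fix j assume j: "j \<in> {..<K}"
    have "dim_vec (g (k + j)) = d" using assms j by auto
    thus "a $ j * (f (k + j) + g (k + j)) $ r = a $ j * f (k + j) $ r + a $ j * g (k + j) $ r"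
      using r by (simp add: distrib_left)
  qed
  finally have "lc d K a (\<lambda>i. f i + g i) k $ r = (\<Sum>j<K. a $ j * f (k + j) $ r + a $ j * g (k + j) $ r)" .
  thus "lc d K a (\<lambda>i. f i + g i) k $ r = (lc d K a f k + lc d K a g k) $ r"
    using r by (simp add: sum.distrib)
qed simp

lemma pow_mat_Suc_left:
  fixes A :: "real mat"
  assumes A: "A \<in> carrier_mat n n"
  shows "A ^\<^sub>m Suc k = A * A ^\<^sub>m k"
proof (induction k)
  case 0
  then show ?case using A by simp
next
  case (Suc k)
  have "A ^\<^sub>m Suc (Suc k) = A ^\<^sub>m Suc k * A" by simp
  also have "\<dots> = (A * A ^\<^sub>m k) * A" using Suc by simp
  also have "\<dots> = A * (A ^\<^sub>m k * A)" using A by (simp add: assoc_mult_mat[of _ n n _ n _ n])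
  finally show ?case by simp
qed

lemma vec_add_cancel:
  fixes a b c :: "real vec"
  assumes "a \<in> carrier_vec d" "b \<in> carrier_vec d" "c \<in> carrier_vec d" "a + c = b + c"
  shows "a = b"
proof (rule eq_vecI)
  fix i assume i: "i < dim_vec b"
  have "(a + c) $ i = (b + c) $ i" using assms by simp
  moreover have "dim_vec c = d" "dim_vec b = d" using assms(2,3) by auto
  ultimately show "a $ i = b $ i" using i by simp
qed (use assms in simp)

lemma obs_unique:
  fixes A B C D :: "real mat"
  assumes A: "A \<in> carrier_mat n n" and B: "B \<in> carrier_mat n m"
    and C: "C \<in> carrier_mat p n" and D: "D \<in> carrier_mat p m"
    and obs: "mrank (obsv_mat n p A C) = n"
    and X10: "X1 0 \<in> carrier_vec n" and X20: "X2 0 \<in> carrier_vec n"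
    and dyn: "\<forall>k<n. U k \<in> carrier_vec m \<and> X1 (Suc k) = A *\<^sub>v X1 k + B *\<^sub>v U k
       \<and> X2 (Suc k) = A *\<^sub>v X2 k + B *\<^sub>v U k \<and> C *\<^sub>v X1 k + D *\<^sub>v U k = C *\<^sub>v X2 k + D *\<^sub>v U k"
  shows "X1 0 = X2 0"
proof -
  define Z0 where "Z0 = X1 0 - X2 0"
  have Z0: "Z0 \<in> carrier_vec n" using X10 X20 by (simp add: Z0_def)
  have inv: "X1 k \<in> carrier_vec n \<and> X2 k \<in> carrier_vec n \<and> X1 k - X2 k = A ^\<^sub>m k *\<^sub>v Z0"
    if "k \<le> n" for k
    using that
  proof (induction k)
    case 0
    then show ?case using X10 X20 Z0 A by (simp add: Z0_def)
  next
    case (Suc k)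
    hence k: "k < n" and IH: "X1 k \<in> carrier_vec n" "X2 k \<in> carrier_vec n" "X1 k - X2 k = A ^\<^sub>m k *\<^sub>v Z0"
      by auto
    have U: "U k \<in> carrier_vec m" and e1: "X1 (Suc k) = A *\<^sub>v X1 k + B *\<^sub>v U k"
      and e2: "X2 (Suc k) = A *\<^sub>v X2 k + B *\<^sub>v U k" using dyn k by auto
    have c1: "X1 (Suc k) \<in> carrier_vec n" "X2 (Suc k) \<in> carrier_vec n" unfolding e1 e2 using A B U IH(1,2) by auto
    have "X1 (Suc k) - X2 (Suc k) = A *\<^sub>v X1 k - A *\<^sub>v X2 k"
      unfolding e1 e2 using A B U IH by (intro eq_vecI) auto
    also have "\<dots> = A *\<^sub>v (X1 k - X2 k)" using mult_minus_distrib_mat_vec[OF A IH(1,2)] by simp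
    also have "\<dots> = (A * A ^\<^sub>m k) *\<^sub>v Z0" 
    proof -
      have Ak: "A ^\<^sub>m k \<in> carrier_mat n n" using A by simp
      show ?thesis unfolding IH(3) using assoc_mult_mat_vec[OF A Ak Z0] by simp
    qed
    also have "\<dots> = A ^\<^sub>m Suc k *\<^sub>v Z0" using pow_mat_Suc_left[OF A] by simp
    finally show ?case using c1 by simp
  qed
  have CZ: "C *\<^sub>v (A ^\<^sub>m k *\<^sub>v Z0) = 0\<^sub>v p" if k: "k < n" for k
  proof -
    have i: "X1 k \<in> carrier_vec n" "X2 k \<in> carrier_vec n" "X1 k - X2 k = A ^\<^sub>m k *\<^sub>v Z0"
      using inv[of k] k by auto
    have U: "U k \<in> carrier_vec m" and o: "C *\<^sub>v X1 k + D *\<^sub>v U k = C *\<^sub>v X2 k + D *\<^sub>v U k"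
      using dyn k by auto
    have "C *\<^sub>v X1 k = C *\<^sub>v X2 k" by (rule vec_add_cancel[where d=p, OF _ _ _ o]) (use C D U i in auto)
    hence "C *\<^sub>v (X1 k - X2 k) = 0\<^sub>v p"
      using mult_minus_distrib_mat_vec[OF C i(1,2)] C i by (auto intro!: eq_vecI)
    thus ?thesis using i(3) by simp
  qed
  have "obsv_mat n p A C *\<^sub>v Z0 = 0\<^sub>v (n * p)"
  proof (rule eq_vecI)
    fix i assume "i < dim_vec (0\<^sub>v (n * p) :: real vec)"
    hence i: "i < n * p" by simp
    hence q: "i div p < n" and r: "i mod p < p"
      by (simp add: less_mult_imp_div_less mult.commute) (metis i mod_less_divisor mult_is_0 neq0_conv not_less0)
    have Ak: "A ^\<^sub>m (i div p) \<in> carrier_mat n n" using A by simp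
    have "(obsv_mat n p A C *\<^sub>v Z0) $ i = (\<Sum>l<n. (C * A ^\<^sub>m (i div p)) $$ (i mod p, l) * Z0 $ l)"
      using i Z0 by (simp add: obsv_mat_def scalar_prod_def atLeast0LessThan)
    also have "\<dots> = ((C * A ^\<^sub>m (i div p)) *\<^sub>v Z0) $ (i mod p)"
    proof -
      have gen: "\<And>G r. G \<in> carrier_mat p n \<Longrightarrow> r < p \<Longrightarrow> (G *\<^sub>v Z0) $ r = (\<Sum>l<n. G $$ (r, l) * Z0 $ l)"
        using Z0 by (simp add: scalar_prod_def atLeast0LessThan)
      have G: "C * A ^\<^sub>m (i div p) \<in> carrier_mat p n" using C Ak by simp
      show ?thesis using gen[OF G r] by simp
    qed
    also have "\<dots> = (C *\<^sub>v (A ^\<^sub>m (i div p) *\<^sub>v Z0)) $ (i mod p)" using C Ak Z0 by simp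
    also have "\<dots> = 0" using CZ[OF q] r by simp
    finally show "(obsv_mat n p A C *\<^sub>v Z0) $ i = 0\<^sub>v (n * p) $ i" using i by simp
  qed (simp add: obsv_mat_def)
  hence "Z0 = 0\<^sub>v n"
    using mrank_col_inj[of "obsv_mat n p A C" "n * p" n Z0] obs Z0 by (simp add: obsv_mat_def)
  show ?thesis
  proof (rule eq_vecI)
    fix i assume "i < dim_vec (X2 0)"
    hence i: "i < n" using X20 by simp
    have "(X1 0 - X2 0) $ i = 0" using \<open>Z0 = 0\<^sub>v n\<close> i unfolding Z0_def by simp
    thus "X1 0 $ i = X2 0 $ i" using i X20 by simp
  qed (use X10 X20 in simp)
qed

lemma sum_split_add: fixes f :: "nat \<Rightarrow> real" shows "(\<Sum>i<a+b. f i) = (\<Sum>i<a. f i) + (\<Sum>i<b. f (a + i))"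
  by (induction b) (auto simp: add.assoc)

lemma sum_split_mult: fixes f :: "nat \<Rightarrow> real" shows "(\<Sum>i<m*K. f i) = (\<Sum>k<K. \<Sum>s<m. f (k * m + s))"
proof (induction K)
  case 0 then show ?case by simp
next
  case (Suc K)
  have "(\<Sum>i<m * Suc K. f i) = (\<Sum>i<m*K + m. f i)" by (simp add: algebra_simps)
  also have "\<dots> = (\<Sum>i<m*K. f i) + (\<Sum>s<m. f (m * K + s))" by (rule sum_split_add)
  also have "\<dots> = (\<Sum>k<Suc K. \<Sum>s<m. f (k * m + s))" using Suc by (simp add: mult.commute)
  finally show ?case .
qed

lemma idx_lt: "k < L \<Longrightarrow> s < (m::nat) \<Longrightarrow> k * m + s < m * L"
proof -
  assume k: "k < L" and s: "s < m"
  have "k * m + s < k * m + m" using s by simp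
  also have "\<dots> = Suc k * m" by simp
  also have "\<dots> \<le> L * m" using k by (intro mult_le_mono1) simp
  finally show ?thesis by (simp add: mult.commute)
qed

lemma idx_div[simp]: "s < (m::nat) \<Longrightarrow> (k * m + s) div m = k"
  and idx_mod[simp]: "s < (m::nat) \<Longrightarrow> (k * m + s) mod m = s"
  by auto

lemma sum_window: fixes g :: "nat \<Rightarrow> real" shows "t + L \<le> K \<Longrightarrow>
  (\<Sum>q<K. if t \<le> q \<and> q < t + L then g q else 0) = (\<Sum>k<L. g (k + t))"
proof -
  assume tK: "t + L \<le> K"
  have "(\<Sum>q<K. if t \<le> q \<and> q < t + L then g q else 0) = sum g {q \<in> {..<K}. t \<le> q \<and> q < t + L}"
    using sum.inter_filter[of "{..<K}" g "\<lambda>q. t \<le> q \<and> q < t + L"] by simp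
  also have "{q \<in> {..<K}. t \<le> q \<and> q < t + L} = {0 + t..<L + t}" using tK by auto
  also have "sum g {0 + t..<L + t} = (\<Sum>k\<in>{0..<L}. g (k + t))" by (rule sum.shift_bounds_nat_ivl)
  finally show ?thesis by (simp add: atLeast0LessThan)
qed

lemma sum_prefix: fixes g :: "nat \<Rightarrow> real" shows "t \<le> K \<Longrightarrow> (\<Sum>q<K. if q < t then g q else 0) = (\<Sum>q<t. g q)"
proof -
  assume tK: "t \<le> K"
  have "(\<Sum>q<K. if q < t then g q else 0) = sum g {q \<in> {..<K}. q < t}"
    using sum.inter_filter[of "{..<K}" g "\<lambda>q. q < t"] by simp
  also have "{q \<in> {..<K}. q < t} = {..<t}" using tK by auto
  finally show ?thesis .
qed

lemma swap3:
  fixes c :: "nat \<Rightarrow> real"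
  shows "(\<Sum>q\<in>Q. \<Sum>s\<in>S. (\<Sum>t\<in>T. c t * G t q s) * h q s) = (\<Sum>t\<in>T. c t * (\<Sum>q\<in>Q. \<Sum>s\<in>S. G t q s * h q s))"
proof -
  have "(\<Sum>q\<in>Q. \<Sum>s\<in>S. (\<Sum>t\<in>T. c t * G t q s) * h q s) = (\<Sum>q\<in>Q. \<Sum>s\<in>S. \<Sum>t\<in>T. c t * (G t q s * h q s))"
    by (simp add: sum_distrib_right mult.assoc)
  also have "\<dots> = (\<Sum>q\<in>Q. \<Sum>t\<in>T. \<Sum>s\<in>S. c t * (G t q s * h q s))"
    by (rule sum.cong[OF refl], rule sum.swap)
  also have "\<dots> = (\<Sum>t\<in>T. \<Sum>q\<in>Q. \<Sum>s\<in>S. c t * (G t q s * h q s))" by (rule sum.swap)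
  also have "\<dots> = (\<Sum>t\<in>T. c t * (\<Sum>q\<in>Q. \<Sum>s\<in>S. G t q s * h q s))" by (simp add: sum_distrib_left)
  finally show ?thesis .
qed

lemma pow_mat_add:
  fixes A :: "real mat"
  assumes A: "A \<in> carrier_mat n n"
  shows "A ^\<^sub>m a * A ^\<^sub>m b = A ^\<^sub>m (a + b)"
proof (induction b)
  case 0 then show ?case using A by simp
next
  case (Suc b)
  have "A ^\<^sub>m a * A ^\<^sub>m Suc b = A ^\<^sub>m a * (A ^\<^sub>m b * A)" by simp
  also have "\<dots> = (A ^\<^sub>m a * A ^\<^sub>m b) * A" using A by (simp add: assoc_mult_mat[of _ n n _ n _ n])
  finally show ?case using Suc by simp
qed

locale sysd =
  fixes n m p :: nat and A B C D :: "real mat" and N :: nat and u y x :: "nat \<Rightarrow> real vec"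
  assumes A: "A \<in> carrier_mat n n" and B: "B \<in> carrier_mat n m"
    and C: "C \<in> carrier_mat p n" and D: "D \<in> carrier_mat p m"
    and x0: "x 0 \<in> carrier_vec n"
    and uc: "\<forall>k<N. u k \<in> carrier_vec m"
    and dyn: "\<forall>k<N. x (Suc k) = A *\<^sub>v x k + B *\<^sub>v u k \<and> y k = C *\<^sub>v x k + D *\<^sub>v u k"
begin

lemma xc: "k \<le> N \<Longrightarrow> x k \<in> carrier_vec n"
proof (induction k)
  case 0 then show ?case using x0 by simp
next
  case (Suc k)
  hence "k < N" by simp
  thus ?case using dyn Suc A B uc by auto
qed

lemma lc_step:
  assumes kK: "k + K \<le> N"
  shows "lc n K a x (Suc k) = A *\<^sub>v lc n K a x k + B *\<^sub>v lc m K a u k"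
proof -
  have "lc n K a x (Suc k) = lc n K a (\<lambda>i. A *\<^sub>v x i + B *\<^sub>v u i) k"
  proof (rule eq_vecI)
    fix r assume "r < dim_vec (lc n K a (\<lambda>i. A *\<^sub>v x i + B *\<^sub>v u i) k)"
    hence r: "r < n" by simp
    have "lc n K a x (Suc k) $ r = (\<Sum>j<K. a $ j * x (Suc k + j) $ r)" using r by simp
    also have "\<dots> = (\<Sum>j<K. a $ j * (A *\<^sub>v x (k + j) + B *\<^sub>v u (k + j)) $ r)"
      by (rule sum.cong) (use dyn kK in auto)
    also have "\<dots> = lc n K a (\<lambda>i. A *\<^sub>v x i + B *\<^sub>v u i) k $ r" using r by simp
    finally show "lc n K a x (Suc k) $ r = lc n K a (\<lambda>i. A *\<^sub>v x i + B *\<^sub>v u i) k $ r" .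
  qed simp
  also have "\<dots> = lc n K a (\<lambda>i. A *\<^sub>v x i) k + lc n K a (\<lambda>i. B *\<^sub>v u i) k"
    by (rule lc_add) (use kK xc uc A B in auto)
  also have "\<dots> = A *\<^sub>v lc n K a x k + B *\<^sub>v lc m K a u k"
    using lc_mat[OF A, of K x k a] lc_mat[OF B, of K u k a] kK xc uc by auto
  finally show ?thesis .
qed

lemma lc_out:
  assumes kK: "k + K \<le> N"
  shows "lc p K a y k = C *\<^sub>v lc n K a x k + D *\<^sub>v lc m K a u k"
proof -
  have "lc p K a y k = lc p K a (\<lambda>i. C *\<^sub>v x i + D *\<^sub>v u i) k"
  proof (rule eq_vecI)
    fix r assume "r < dim_vec (lc p K a (\<lambda>i. C *\<^sub>v x i + D *\<^sub>v u i) k)"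
    hence r: "r < p" by simp
    have "lc p K a y (k) $ r = (\<Sum>j<K. a $ j * y (k + j) $ r)" using r by simp
    also have "\<dots> = (\<Sum>j<K. a $ j * (C *\<^sub>v x (k + j) + D *\<^sub>v u (k + j)) $ r)"
      by (rule sum.cong) (use dyn kK in auto)
    also have "\<dots> = lc p K a (\<lambda>i. C *\<^sub>v x i + D *\<^sub>v u i) k $ r" using r by simp
    finally show "lc p K a y (k) $ r = lc p K a (\<lambda>i. C *\<^sub>v x i + D *\<^sub>v u i) k $ r" .
  qed simp
  also have "\<dots> = lc p K a (\<lambda>i. C *\<^sub>v x i) k + lc p K a (\<lambda>i. D *\<^sub>v u i) k"
    by (rule lc_add) (use kK xc uc C D in auto)
  also have "\<dots> = C *\<^sub>v lc n K a x k + D *\<^sub>v lc m K a u k"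
    using lc_mat[OF C, of K x k a] lc_mat[OF D, of K u k a] kK xc uc by auto
  finally show ?thesis .
qed

lemma state_exp:
  fixes \<xi> :: "real vec"
  assumes xi: "\<xi> \<in> carrier_vec n"
  shows "j + t \<le> N \<Longrightarrow> \<xi> \<bullet> (A ^\<^sub>m q *\<^sub>v x (j + t)) = \<xi> \<bullet> (A ^\<^sub>m (q + t) *\<^sub>v x j)
     + (\<Sum>i<t. \<xi> \<bullet> (A ^\<^sub>m (q + t - 1 - i) *\<^sub>v (B *\<^sub>v u (j + i))))"
proof (induction t arbitrary: q)
  case 0 then show ?case by simp
next
  case (Suc t)
  hence jt: "j + t < N" by simp
  have Aq: "A ^\<^sub>m q \<in> carrier_mat n n" using A by simp
  have xj: "x (j + t) \<in> carrier_vec n" using xc jt by simp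
  have uj: "u (j + t) \<in> carrier_vec m" using uc jt by simp
  have "x (j + Suc t) = A *\<^sub>v x (j + t) + B *\<^sub>v u (j + t)" using dyn jt by simp
  hence e: "A ^\<^sub>m q *\<^sub>v x (j + Suc t) = A ^\<^sub>m q *\<^sub>v (A *\<^sub>v x (j + t)) + A ^\<^sub>m q *\<^sub>v (B *\<^sub>v u (j + t))"
    using mult_add_distrib_mat_vec[OF Aq, of "A *\<^sub>v x (j + t)" "B *\<^sub>v u (j + t)"] A B xj uj by simp
  have "\<xi> \<bullet> (A ^\<^sub>m q *\<^sub>v x (j + Suc t)) = \<xi> \<bullet> (A ^\<^sub>m q *\<^sub>v (A *\<^sub>v x (j + t))) + \<xi> \<bullet> (A ^\<^sub>m q *\<^sub>v (B *\<^sub>v u (j + t)))"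
  proof -
    have c1: "A ^\<^sub>m q *\<^sub>v (A *\<^sub>v x (j + t)) \<in> carrier_vec n"
      by (rule mult_mat_vec_carrier[OF Aq]) (use A xj in auto)
    have c2: "A ^\<^sub>m q *\<^sub>v (B *\<^sub>v u (j + t)) \<in> carrier_vec n"
      by (rule mult_mat_vec_carrier[OF Aq]) (use B uj in auto)
    show ?thesis unfolding e by (rule scalar_prod_add_distrib[OF xi c1 c2])
  qed
  also have "A ^\<^sub>m q *\<^sub>v (A *\<^sub>v x (j + t)) = A ^\<^sub>m (Suc q) *\<^sub>v x (j + t)"
    using assoc_mult_mat_vec[OF Aq A xj] by simp
  also have "\<xi> \<bullet> (A ^\<^sub>m (Suc q) *\<^sub>v x (j + t)) = \<xi> \<bullet> (A ^\<^sub>m (Suc q + t) *\<^sub>v x j)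
     + (\<Sum>i<t. \<xi> \<bullet> (A ^\<^sub>m (Suc q + t - 1 - i) *\<^sub>v (B *\<^sub>v u (j + i))))"
    using Suc.IH[of "Suc q"] jt by simp
  finally show ?case by (simp add: add.commute add.left_commute)
qed

end

context sysd begin

lemma kernel_zero:
  assumes ctrb: "mrank (ctrb_mat n m A B) = n"
    and pe: "persistently_exciting m N u (L + n)"
    and NL: "L + n \<le> N"
    and v: "v \<in> carrier_vec (m * L + n)"
    and E0: "\<forall>j < N - L + 1. (\<Sum>k<L. \<Sum>s<m. v $ (k*m+s) * u (k + j) $ s) + (\<Sum>r<n. v $ (m*L + r) * x j $ r) = 0"
  shows "v = 0\<^sub>v (m*L+n)"
proof -
  define \<eta> where "\<eta> k s = v $ (k*m+s)" for k s
  define \<xi> where "\<xi> = vec n (\<lambda>r. v $ (m*L + r))"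
  have xi: "\<xi> \<in> carrier_vec n" by (simp add: \<xi>_def)
  have E: "(\<Sum>k<L. \<Sum>s<m. \<eta> k s * u (k + j) $ s) + \<xi> \<bullet> x j = 0" if j: "j < N - L + 1" for j
  proof -
    have "dim_vec (x j) = n" using xc[of j] j NL by auto
    hence "\<xi> \<bullet> x j = (\<Sum>r<n. v $ (m*L + r) * x j $ r)"
      by (simp add: scalar_prod_def \<xi>_def atLeast0LessThan)
    thus ?thesis using E0 j unfolding \<eta>_def by simp
  qed
  obtain d c where dn: "d \<le> n"
    and rel: "\<forall>w\<in>carrier_vec n. \<xi> \<bullet> (A ^\<^sub>m d *\<^sub>v w) = (\<Sum>k<d. c k * (\<xi> \<bullet> (A ^\<^sub>m k *\<^sub>v w)))"
    using ann_rel[OF A xi] by blast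
  define \<phi> where "\<phi> q w = \<xi> \<bullet> (A ^\<^sub>m q *\<^sub>v w)" for q w
  define \<beta> where "\<beta> q s = (\<Sum>r<n. \<xi> $ r * (A ^\<^sub>m q * B) $$ (r, s))" for q s
  have Aq: "A ^\<^sub>m q \<in> carrier_mat n n" for q using A by simp
  have AqB: "A ^\<^sub>m q * B \<in> carrier_mat n m" for q using mult_carrier_mat[OF Aq B] .
  have psi: "\<phi> q (B *\<^sub>v w) = (\<Sum>s<m. \<beta> q s * w $ s)" if w: "w \<in> carrier_vec m" for q w
  proof -
    have "\<phi> q (B *\<^sub>v w) = \<xi> \<bullet> ((A ^\<^sub>m q * B) *\<^sub>v w)"
      unfolding \<phi>_def using assoc_mult_mat_vec[OF Aq B w] by simp
    also have "\<dots> = (\<Sum>r<n. \<xi> $ r * (\<Sum>s<m. (A ^\<^sub>m q * B) $$ (r, s) * w $ s))"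
    proof -
      have g: "\<And>G. G \<in> carrier_mat n m \<Longrightarrow> \<xi> \<bullet> (G *\<^sub>v w) = (\<Sum>r<n. \<xi> $ r * (\<Sum>s<m. G $$ (r, s) * w $ s))"
        using w xi by (simp add: scalar_prod_def atLeast0LessThan)
      show ?thesis by (rule g[OF AqB])
    qed
    also have "\<dots> = (\<Sum>r<n. \<Sum>s<m. w $ s * (\<xi> $ r * (A ^\<^sub>m q * B) $$ (r, s)))"
      by (simp add: sum_distrib_left mult_ac)
    also have "\<dots> = (\<Sum>s<m. \<Sum>r<n. w $ s * (\<xi> $ r * (A ^\<^sub>m q * B) $$ (r, s)))" by (rule sum.swap)
    also have "\<dots> = (\<Sum>s<m. \<beta> q s * w $ s)" by (simp add: \<beta>_def sum_distrib_left mult_ac)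
    finally show ?thesis .
  qed
  have beta_phi: "\<beta> q s = \<phi> q (col B s)" if s: "s < m" for q s
  proof -
    have "\<phi> q (col B s) = \<xi> \<bullet> col (A ^\<^sub>m q * B) s"
      unfolding \<phi>_def using col_mult2[OF Aq B s] by simp
    also have "\<dots> = \<beta> q s"
    proof -
      have g: "\<And>G. G \<in> carrier_mat n m \<Longrightarrow> \<xi> \<bullet> col G s = (\<Sum>r<n. \<xi> $ r * G $$ (r, s))"
        using s xi by (simp add: scalar_prod_def atLeast0LessThan)
      show ?thesis unfolding \<beta>_def by (rule g[OF AqB])
    qed
    finally show ?thesis by simp
  qed
  define c' where "c' t = (if t = d then 1 else - c t)" for t
  have relz: "(\<Sum>t<Suc d. c' t * \<phi> t w) = 0" if w: "w \<in> carrier_vec n" for w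
  proof -
    have "(\<Sum>t<Suc d. c' t * \<phi> t w) = \<phi> d w + (\<Sum>t<d. - (c t * \<phi> t w))"
      by (simp add: c'_def)
    also have "\<dots> = 0" using rel w unfolding \<phi>_def by (simp add: sum_negf)
    finally show ?thesis .
  qed
  define Wf where "Wf q s = (\<Sum>t<Suc d. c' t * (if t \<le> q \<and> q < t + L then \<eta> (q - t) s else 0))
     + (\<Sum>t<Suc d. c' t * (if q < t then \<beta> (t - 1 - q) s else 0))" for q s
  have Wsum: "(\<Sum>q<L+n. \<Sum>s<m. Wf q s * u (q + j) $ s) = 0" if j: "j < N - (L + n) + 1" for j
  proof -
    have jLn: "j + L + n \<le> N" using j NL by simp
    define P1 where "P1 t = (\<Sum>k<L. \<Sum>s<m. \<eta> k s * u (k + t + j) $ s)" for t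
    define P2 where "P2 t = (\<Sum>i<t. \<Sum>s<m. \<beta> (t - 1 - i) s * u (i + j) $ s)" for t
    have part1: "(\<Sum>q<L+n. \<Sum>s<m. (if t \<le> q \<and> q < t + L then \<eta> (q - t) s else 0) * u (q + j) $ s) = P1 t"
      if t: "t < Suc d" for t
    proof -
      have "(\<Sum>q<L+n. \<Sum>s<m. (if t \<le> q \<and> q < t + L then \<eta> (q - t) s else 0) * u (q + j) $ s)
          = (\<Sum>q<L+n. if t \<le> q \<and> q < t + L then (\<Sum>s<m. \<eta> (q - t) s * u (q + j) $ s) else 0)"
        by (intro sum.cong refl) auto
      also have "\<dots> = (\<Sum>k<L. \<Sum>s<m. \<eta> (k + t - t) s * u (k + t + j) $ s)"
        by (rule sum_window) (use t dn in simp)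
      finally show ?thesis unfolding P1_def by simp
    qed
    have part2: "(\<Sum>q<L+n. \<Sum>s<m. (if q < t then \<beta> (t - 1 - q) s else 0) * u (q + j) $ s) = P2 t"
      if t: "t < Suc d" for t
    proof -
      have "(\<Sum>q<L+n. \<Sum>s<m. (if q < t then \<beta> (t - 1 - q) s else 0) * u (q + j) $ s)
          = (\<Sum>q<L+n. if q < t then (\<Sum>s<m. \<beta> (t - 1 - q) s * u (q + j) $ s) else 0)"
        by (intro sum.cong refl) auto
      also have "\<dots> = P2 t" unfolding P2_def by (rule sum_prefix) (use t dn in simp)
      finally show ?thesis .
    qed
    have Et: "P1 t + P2 t + \<phi> t (x j) = 0" if t: "t < Suc d" for t
    proof -
      have jt: "j + t < N - L + 1" using t dn jLn by simp
      have "(\<Sum>k<L. \<Sum>s<m. \<eta> k s * u (k + (j + t)) $ s) + \<xi> \<bullet> x (j + t) = 0" using E[OF jt] .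
      moreover have "(\<Sum>k<L. \<Sum>s<m. \<eta> k s * u (k + (j + t)) $ s) = P1 t"
        unfolding P1_def by (simp add: add.commute add.left_commute)
      moreover have "\<xi> \<bullet> x (j + t) = \<phi> t (x j) + P2 t"
      proof -
        have xjt: "x (j + t) \<in> carrier_vec n" using xc jt by simp
        have "\<xi> \<bullet> x (j + t) = \<xi> \<bullet> (A ^\<^sub>m 0 *\<^sub>v x (j + t))" using A xjt by simp
        also have "\<dots> = \<phi> t (x j) + (\<Sum>i<t. \<phi> (t - 1 - i) (B *\<^sub>v u (j + i)))"
          using state_exp[OF xi, of j t 0] jt unfolding \<phi>_def by simp
        also have "(\<Sum>i<t. \<phi> (t - 1 - i) (B *\<^sub>v u (j + i))) = P2 t"
          unfolding P2_def
        proof (intro sum.cong refl)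
          fix i assume "i \<in> {..<t}"
          hence "j + i < N" using jt by simp
          hence "u (j + i) \<in> carrier_vec m" using uc by simp
          thus "\<phi> (t - 1 - i) (B *\<^sub>v u (j + i)) = (\<Sum>s<m. \<beta> (t - 1 - i) s * u (i + j) $ s)"
            using psi by (simp add: add.commute)
        qed
        finally show ?thesis .
      qed
      ultimately show ?thesis by simp
    qed
    have "(\<Sum>q<L+n. \<Sum>s<m. Wf q s * u (q + j) $ s)
      = (\<Sum>q<L+n. \<Sum>s<m. (\<Sum>t<Suc d. c' t * (if t \<le> q \<and> q < t + L then \<eta> (q - t) s else 0)) * u (q + j) $ s)
      + (\<Sum>q<L+n. \<Sum>s<m. (\<Sum>t<Suc d. c' t * (if q < t then \<beta> (t - 1 - q) s else 0)) * u (q + j) $ s)"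
      unfolding Wf_def by (simp add: distrib_right sum.distrib)
    also have "\<dots> = (\<Sum>t<Suc d. c' t * P1 t) + (\<Sum>t<Suc d. c' t * P2 t)"
      unfolding swap3 using part1 part2 by simp
    also have "\<dots> = (\<Sum>t<Suc d. c' t * (P1 t + P2 t + \<phi> t (x j))) - (\<Sum>t<Suc d. c' t * \<phi> t (x j))"
      by (simp add: distrib_left sum.distrib)
    also have "\<dots> = 0"
    proof -
      have "x j \<in> carrier_vec n" using xc jLn by simp
      thus ?thesis using Et relz by simp
    qed
    finally show ?thesis .
  qed
  define W where "W = vec (m * (L + n)) (\<lambda>i. Wf (i div m) (i mod m))"
  define H where "H = hankel m (L + n) N u"
  have H: "H \<in> carrier_mat (m * (L + n)) (N - (L + n) + 1)" by (simp add: H_def hankel_def)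
  have rH: "mrank H = m * (L + n)" using pe unfolding persistently_exciting_def H_def .
  have W0: "W = 0\<^sub>v (m * (L + n))"
  proof (rule mrank_row_leftker[OF H rH])
    show "W \<in> carrier_vec (m * (L + n))" by (simp add: W_def)
    show "\<forall>j<N - (L + n) + 1. (\<Sum>i<m * (L + n). W $ i * H $$ (i, j)) = 0"
    proof (intro allI impI)
      fix j assume j: "j < N - (L + n) + 1"
      have "(\<Sum>i<m * (L + n). W $ i * H $$ (i, j)) = (\<Sum>q<L+n. \<Sum>s<m. W $ (q*m+s) * H $$ (q*m+s, j))"
        by (rule sum_split_mult)
      also have "\<dots> = (\<Sum>q<L+n. \<Sum>s<m. Wf q s * u (q + j) $ s)"
      proof (intro sum.cong refl)
        fix q s assume q: "q \<in> {..<L+n}" and s: "s \<in> {..<m}"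
        have i: "q * m + s < m * (L + n)" using idx_lt q s by simp
        show "W $ (q*m+s) * H $$ (q*m+s, j) = Wf q s * u (q + j) $ s"
          using i j s unfolding W_def H_def hankel_def by simp
      qed
      also have "\<dots> = 0" using Wsum[OF j] .
      finally show "(\<Sum>i<m * (L + n). W $ i * H $$ (i, j)) = 0" .
    qed
  qed
  have Wq: "Wf q s = 0" if "q < L + n" "s < m" for q s
  proof -
    have i: "q * m + s < m * (L + n)" using idx_lt that by simp
    have "W $ (q*m+s) = 0" using W0 i by simp
    thus ?thesis using i that unfolding W_def by simp
  qed
  have eta0: "\<eta> k s = 0" if k: "k < L" and s: "s < m" for k s
    using k
  proof (induction "L - k" arbitrary: k rule: less_induct)
    case less
    have "Wf (d + k) s = 0" using Wq[of "d + k" s] less.prems dn s by simp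
    moreover have "Wf (d + k) s = \<eta> k s"
    proof -
      have s2: "(\<Sum>t<Suc d. c' t * (if d + k < t then \<beta> (t - 1 - (d + k)) s else 0)) = 0"
        by (intro sum.neutral) auto
      have s1: "(\<Sum>t<d. c' t * (if t \<le> d + k \<and> d + k < t + L then \<eta> (d + k - t) s else 0)) = 0"
      proof (intro sum.neutral ballI)
        fix t assume t: "t \<in> {..<d}"
        show "c' t * (if t \<le> d + k \<and> d + k < t + L then \<eta> (d + k - t) s else 0) = 0"
        proof (cases "t \<le> d + k \<and> d + k < t + L")
          case True
          hence "d + k - t < L" "L - (d + k - t) < L - k" using t by auto
          hence "\<eta> (d + k - t) s = 0" using less.hyps by blast
          thus ?thesis by simp
        qed auto
      qed
      show ?thesis unfolding Wf_def using s1 s2 less.prems by (simp add: c'_def)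
    qed
    ultimately show ?case by simp
  qed
  have beta_low: "\<beta> i s = 0" if i: "i < d" and s: "s < m" for i s
    using i
  proof (induction i rule: less_induct)
    case (less i)
    define q where "q = d - 1 - i"
    have qd: "q < d" "d - 1 - q = i" using less.prems by (auto simp: q_def)
    have "Wf q s = 0" using Wq[of q s] qd dn s by simp
    moreover have "Wf q s = \<beta> i s"
    proof -
      have s1: "(\<Sum>t<Suc d. c' t * (if t \<le> q \<and> q < t + L then \<eta> (q - t) s else 0)) = 0"
        using eta0 s by (intro sum.neutral) auto
      have s2: "(\<Sum>t<d. c' t * (if q < t then \<beta> (t - 1 - q) s else 0)) = 0"
      proof (intro sum.neutral ballI)
        fix t assume t: "t \<in> {..<d}"
        show "c' t * (if q < t then \<beta> (t - 1 - q) s else 0) = 0"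
        proof (cases "q < t")
          case True
          hence "t - 1 - q < i" using t qd by auto
          hence "\<beta> (t - 1 - q) s = 0" using less.IH less.prems by auto
          thus ?thesis by simp
        qed auto
      qed
      show ?thesis unfolding Wf_def using s1 s2 qd by (simp add: c'_def)
    qed
    ultimately show ?case by simp
  qed
  have beta_all: "\<beta> q s = 0" if s: "s < m" for q s
  proof (induction q rule: less_induct)
    case (less q)
    show ?case
    proof (cases "q < d")
      case True thus ?thesis using beta_low s by simp
    next
      case False
      have cB: "col B s \<in> carrier_vec n" using B s by simp
      define w where "w = A ^\<^sub>m (q - d) *\<^sub>v col B s"
      have w: "w \<in> carrier_vec n" unfolding w_def by (rule mult_mat_vec_carrier[OF Aq cB])
      have pw: "\<phi> k w = \<phi> (k + (q - d)) (col B s)" for k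
      proof -
        have "A ^\<^sub>m k *\<^sub>v w = (A ^\<^sub>m k * A ^\<^sub>m (q - d)) *\<^sub>v col B s"
          unfolding w_def using assoc_mult_mat_vec[OF Aq Aq cB] by simp
        thus ?thesis unfolding \<phi>_def using pow_mat_add[OF A] by simp
      qed
      have "\<beta> q s = \<phi> q (col B s)" using beta_phi s by simp
      also have "\<dots> = \<phi> d w" using pw[of d] False by simp
      also have "\<dots> = (\<Sum>k<d. c k * \<phi> k w)" using rel w unfolding \<phi>_def by simp
      also have "\<dots> = (\<Sum>k<d. c k * \<beta> (k + (q - d)) s)" using pw beta_phi s by simp
      also have "\<dots> = 0"
      proof (intro sum.neutral ballI)
        fix k assume "k \<in> {..<d}"
        hence "k + (q - d) < q" using False by auto
        thus "c k * \<beta> (k + (q - d)) s = 0" using less.IH by simp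
      qed
      finally show ?thesis .
    qed
  qed
  have xi0: "\<xi> = 0\<^sub>v n"
  proof (rule mrank_row_leftker[OF _ ctrb xi])
    show "ctrb_mat n m A B \<in> carrier_mat n (n * m)" by (simp add: ctrb_mat_def)
    show "\<forall>j<n * m. (\<Sum>i<n. \<xi> $ i * ctrb_mat n m A B $$ (i, j)) = 0"
    proof (intro allI impI)
      fix j assume j: "j < n * m"
      hence jm: "j mod m < m" by (metis mod_less_divisor mult_is_0 neq0_conv not_less0)
      have "(\<Sum>i<n. \<xi> $ i * ctrb_mat n m A B $$ (i, j)) = \<beta> (j div m) (j mod m)"
        unfolding \<beta>_def ctrb_mat_def using j by (intro sum.cong refl) simp
      also have "\<dots> = 0" using beta_all jm by simp
      finally show "(\<Sum>i<n. \<xi> $ i * ctrb_mat n m A B $$ (i, j)) = 0" .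
    qed
  qed
  show ?thesis
  proof (rule eq_vecI)
    fix i assume "i < dim_vec (0\<^sub>v (m * L + n) :: real vec)"
    hence i: "i < m * L + n" by simp
    show "v $ i = 0\<^sub>v (m * L + n) $ i"
    proof (cases "i < m * L")
      case True
      hence m0: "0 < m" by (cases m) auto
      have ik: "i div m < L" using True by (simp add: less_mult_imp_div_less mult.commute)
      have "v $ i = \<eta> (i div m) (i mod m)" unfolding \<eta>_def by simp
      also have "\<dots> = 0" using eta0[OF ik] m0 by simp
      finally show ?thesis using i by simp
    next
      case False
      hence "i - m * L < n" using i by simp
      hence "\<xi> $ (i - m * L) = 0" using xi0 by simp
      moreover have "m * L + (i - m * L) = i" using False by simp
      ultimately show ?thesis using False i unfolding \<xi>_def by simp
    qed
  qed (use v in simp)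
qed

end

context sysd begin

lemma fund:
  assumes ctrb: "mrank (ctrb_mat n m A B) = n"
    and pe: "persistently_exciting m N u (L + n)"
    and NL: "L + n \<le> N"
    and ub: "\<forall>k<L. ub k \<in> carrier_vec m" and xb: "xb \<in> carrier_vec n"
  shows "\<exists>a\<in>carrier_vec (N - L + 1). (\<forall>k<L. lc m (N - L + 1) a u k = ub k) \<and> lc n (N - L + 1) a x 0 = xb"
proof -
  define Mx where "Mx = mat (m*L+n) (N-L+1) (\<lambda>(i,j). if i < m*L then u (i div m + j) $ (i mod m) else x j $ (i - m*L))"
  define b where "b = vec (m*L+n) (\<lambda>i. if i < m*L then ub (i div m) $ (i mod m) else xb $ (i - m*L))"
  have Mx: "Mx \<in> carrier_mat (m*L+n) (N-L+1)" by (simp add: Mx_def)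
  have bc: "b \<in> carrier_vec (m*L+n)" by (simp add: b_def)
  have lk: "w = 0\<^sub>v (m*L+n)" if w: "w \<in> carrier_vec (m*L+n)"
    and h: "\<forall>j<N-L+1. (\<Sum>i<m*L+n. w $ i * Mx $$ (i, j)) = 0" for w
  proof (rule kernel_zero[OF ctrb pe NL w])
    show "\<forall>j < N - L + 1. (\<Sum>k<L. \<Sum>s<m. w $ (k*m+s) * u (k + j) $ s) + (\<Sum>r<n. w $ (m*L + r) * x j $ r) = 0"
    proof (intro allI impI)
      fix j assume j: "j < N - L + 1"
      have "(\<Sum>i<m*L+n. w $ i * Mx $$ (i, j)) = (\<Sum>i<m*L. w $ i * Mx $$ (i, j)) + (\<Sum>r<n. w $ (m*L + r) * Mx $$ (m*L + r, j))"
        by (rule sum_split_add)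
      also have "(\<Sum>i<m*L. w $ i * Mx $$ (i, j)) = (\<Sum>k<L. \<Sum>s<m. w $ (k*m+s) * Mx $$ (k*m+s, j))"
        by (rule sum_split_mult)
      also have "\<dots> = (\<Sum>k<L. \<Sum>s<m. w $ (k*m+s) * u (k + j) $ s)"
      proof (intro sum.cong refl)
        fix k s assume "k \<in> {..<L}" "s \<in> {..<m}"
        hence "k * m + s < m * L" "s < m" using idx_lt by auto
        thus "w $ (k*m+s) * Mx $$ (k*m+s, j) = w $ (k*m+s) * u (k + j) $ s"
          using j unfolding Mx_def by simp
      qed
      also have "(\<Sum>r<n. w $ (m*L + r) * Mx $$ (m*L + r, j)) = (\<Sum>r<n. w $ (m*L + r) * x j $ r)"
        using j unfolding Mx_def by (intro sum.cong refl) simp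
      finally show "(\<Sum>k<L. \<Sum>s<m. w $ (k*m+s) * u (k + j) $ s) + (\<Sum>r<n. w $ (m*L + r) * x j $ r) = 0"
        using h j by simp
    qed
  qed
  obtain a where a: "a \<in> carrier_vec (N-L+1)" "Mx *\<^sub>v a = b"
    using leftker_surj[OF Mx, of b] lk bc by blast
  have gen: "(Mx *\<^sub>v a) $ i = (\<Sum>j<N-L+1. Mx $$ (i, j) * a $ j)" if "i < m*L+n" for i
    using Mx a(1) that by (simp add: scalar_prod_def atLeast0LessThan)
  have "lc m (N - L + 1) a u k = ub k" if k: "k < L" for k
  proof (rule eq_vecI)
    fix s assume "s < dim_vec (ub k)"
    hence s: "s < m" using ub k by auto
    have i: "k * m + s < m * L" using idx_lt k s by simp
    have "lc m (N - L + 1) a u k $ s = (\<Sum>j<N-L+1. Mx $$ (k*m+s, j) * a $ j)"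
      using s i unfolding Mx_def by (simp add: mult.commute)
    also have "\<dots> = b $ (k*m+s)" using gen[of "k*m+s"] i a(2) by simp
    also have "\<dots> = ub k $ s" using i s by (simp add: b_def)
    finally show "lc m (N - L + 1) a u k $ s = ub k $ s" .
  qed (use ub k in auto)
  moreover have "lc n (N - L + 1) a x 0 = xb"
  proof (rule eq_vecI)
    fix r assume "r < dim_vec xb"
    hence r: "r < n" using xb by auto
    have "lc n (N - L + 1) a x 0 $ r = (\<Sum>j<N-L+1. Mx $$ (m*L+r, j) * a $ j)"
      using r unfolding Mx_def by (simp add: mult.commute)
    also have "\<dots> = b $ (m*L+r)" using gen[of "m*L+r"] r a(2) by simp
    also have "\<dots> = xb $ r" using r by (simp add: b_def)
    finally show "lc n (N - L + 1) a x 0 $ r = xb $ r" .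
  qed (use xb in auto)
  ultimately show ?thesis using a(1) by blast
qed

end

definition flat :: "nat \<Rightarrow> nat \<Rightarrow> (nat \<Rightarrow> real vec) \<Rightarrow> real vec" where
  "flat d K g = vec (d * K) (\<lambda>i. g (i div d) $ (i mod d))"

lemma flat_carrier[simp]: "flat d K g \<in> carrier_vec (d * K)" and flat_dim[simp]: "dim_vec (flat d K g) = d * K"
  by (auto simp: flat_def)

lemma hankel_mult:
  assumes a: "a \<in> carrier_vec (Nx - K + 1)"
  shows "hankel d K Nx f *\<^sub>v a = flat d K (lc d (Nx - K + 1) a f)"
proof (rule eq_vecI)
  fix i assume "i < dim_vec (flat d K (lc d (Nx - K + 1) a f))"
  hence i: "i < d * K" by simp
  hence d0: "0 < d" by (cases d) auto
  hence im: "i mod d < d" by simp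
  have da: "dim_vec a = Nx - K + 1" using a by auto
  have "(hankel d K Nx f *\<^sub>v a) $ i = (\<Sum>j<Nx - K + 1. f (i div d + j) $ (i mod d) * a $ j)"
    using i da by (simp add: hankel_def scalar_prod_def atLeast0LessThan)
  also have "\<dots> = lc d (Nx - K + 1) a f (i div d) $ (i mod d)"
    using im by (simp add: mult.commute)
  finally show "(hankel d K Nx f *\<^sub>v a) $ i = flat d K (lc d (Nx - K + 1) a f) $ i"
    using i by (simp add: flat_def)
qed (simp add: hankel_def)

lemma lc_subseq: "lc d M a (subseq f c) k = lc d M a f (c + k)"
  unfolding lc_def subseq_def by (simp add: add.assoc)

lemma stack_flat: "1 \<le> T \<Longrightarrow> stack d g 0 (T - 1) = flat d T g"
  unfolding stack_def flat_def by simp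

lemma flat_append: "flat d K g @\<^sub>v flat d K' (\<lambda>k. g (K + k)) = flat d (K + K') g"
proof (rule eq_vecI)
  fix i assume "i < dim_vec (flat d (K + K') g)"
  hence i: "i < d * K + d * K'" by (simp add: distrib_left)
  show "(flat d K g @\<^sub>v flat d K' (\<lambda>k. g (K + k))) $ i = flat d (K + K') g $ i"
  proof (cases "i < d * K")
    case True
    then show ?thesis using i by (simp add: flat_def distrib_left)
  next
    case False
    define j where "j = i - d * K"
    have ij: "i = j + K * d" using False by (simp add: j_def mult.commute)
    have d0: "0 < d" using i False by (cases d) auto
    have "i div d = K + j div d" "i mod d = j mod d" using d0 ij by simp_all
    thus ?thesis using i False by (simp add: flat_def distrib_left j_def)
  qed
qed (simp add: distrib_left)

lemma flat_eq: "flat d K g = flat d K h \<longleftrightarrow> (\<forall>k<K. \<forall>s<d. g k $ s = h k $ s)"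
proof
  assume e: "flat d K g = flat d K h"
  show "\<forall>k<K. \<forall>s<d. g k $ s = h k $ s"
  proof (intro allI impI)
    fix k s assume k: "k < K" and s: "s < d"
    have i: "k * d + s < d * K" using idx_lt k s by simp
    have "flat d K g $ (k * d + s) = flat d K h $ (k * d + s)" using e by simp
    thus "g k $ s = h k $ s" using i s by (simp add: flat_def)
  qed
next
  assume h: "\<forall>k<K. \<forall>s<d. g k $ s = h k $ s"
  show "flat d K g = flat d K h"
  proof (rule eq_vecI)
    fix i assume "i < dim_vec (flat d K h)"
    hence i: "i < d * K" by simp
    hence "0 < d" by (cases d) auto
    hence "i div d < K" "i mod d < d" using i by (simp_all add: less_mult_imp_div_less mult.commute)
    thus "flat d K g $ i = flat d K h $ i" using i h by (simp add: flat_def)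
  qed simp
qed

lemma foldr_append_carrier:
  "(\<forall>v\<in>set vs. v \<in> carrier_vec c) \<Longrightarrow> foldr (@\<^sub>v) vs (vec 0 f) \<in> carrier_vec (length vs * c)"
  by (induction vs) auto

lemma foldr_flat_eq:
  "(foldr (@\<^sub>v) (map (\<lambda>i. flat d K' (g i)) [a..<a+c]) (vec 0 f) = flat d (c * K') w) \<longleftrightarrow>
   (\<forall>i<c. \<forall>k<K'. \<forall>s<d. g (a + i) k $ s = w (i * K' + k) $ s)"
proof (induction c arbitrary: a w)
  case 0
  have "vec 0 f = flat d 0 w" by (rule eq_vecI) auto
  then show ?case by simp
next
  case (Suc c)
  have ups: "[a..<a + Suc c] = a # [Suc a..<Suc a + c]" by (simp add: upt_conv_Cons)
  have fl: "flat d (Suc c * K') w = flat d K' w @\<^sub>v flat d (c * K') (\<lambda>k. w (K' + k))"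
    using flat_append[of d K' w "c * K'"] by simp
  have "(foldr (@\<^sub>v) (map (\<lambda>i. flat d K' (g i)) [a..<a+Suc c]) (vec 0 f) = flat d (Suc c * K') w)
     \<longleftrightarrow> flat d K' (g a) = flat d K' w \<and>
         foldr (@\<^sub>v) (map (\<lambda>i. flat d K' (g i)) [Suc a..<Suc a+c]) (vec 0 f) = flat d (c * K') (\<lambda>k. w (K' + k))"
    unfolding ups fl by (simp add: append_vec_eq[of _ "d * K'"])
  also have "\<dots> \<longleftrightarrow> (\<forall>k<K'. \<forall>s<d. g a k $ s = w k $ s) \<and>
       (\<forall>i<c. \<forall>k<K'. \<forall>s<d. g (Suc a + i) k $ s = w (K' + (i * K' + k)) $ s)"
    unfolding Suc.IH flat_eq ..
  also have "\<dots> \<longleftrightarrow> (\<forall>i<Suc c. \<forall>k<K'. \<forall>s<d. g (a + i) k $ s = w (i * K' + k) $ s)"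
  proof
    assume h: "(\<forall>k<K'. \<forall>s<d. g a k $ s = w k $ s) \<and>
       (\<forall>i<c. \<forall>k<K'. \<forall>s<d. g (Suc a + i) k $ s = w (K' + (i * K' + k)) $ s)"
    show "\<forall>i<Suc c. \<forall>k<K'. \<forall>s<d. g (a + i) k $ s = w (i * K' + k) $ s"
    proof (intro allI impI)
      fix i k s assume i: "i < Suc c" and k: "k < K'" and s: "s < d"
      show "g (a + i) k $ s = w (i * K' + k) $ s"
      proof (cases i)
        case 0 then show ?thesis using h k s by simp
      next
        case (Suc i')
        have "a + i = Suc a + i'" "i * K' + k = K' + (i' * K' + k)" using Suc by simp_all
        moreover have "i' < c" using i Suc by simp
        ultimately show ?thesis using h k s by (simp add: add.assoc)
      qed
    qed
  next
    assume h: "\<forall>i<Suc c. \<forall>k<K'. \<forall>s<d. g (a + i) k $ s = w (i * K' + k) $ s"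
    have h0: "\<forall>k<K'. \<forall>s<d. g a k $ s = w k $ s" using h[rule_format, of 0] by simp
    have h1: "\<forall>i<c. \<forall>k<K'. \<forall>s<d. g (Suc a + i) k $ s = w (K' + (i * K' + k)) $ s"
    proof (intro allI impI)
      fix i k s assume i: "i < c" and k: "k < K'" and s: "s < d"
      have "Suc i < Suc c" using i by simp
      hence "g (a + Suc i) k $ s = w (Suc i * K' + k) $ s" using h k s by blast
      moreover have "a + Suc i = Suc a + i" "Suc i * K' + k = K' + (i * K' + k)" by simp_all
      ultimately show "g (Suc a + i) k $ s = w (K' + (i * K' + k)) $ s" by (simp add: add.assoc)
    qed
    show "(\<forall>k<K'. \<forall>s<d. g a k $ s = w k $ s) \<and>
       (\<forall>i<c. \<forall>k<K'. \<forall>s<d. g (Suc a + i) k $ s = w (K' + (i * K' + k)) $ s)" using h0 h1 by simp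
  qed
  finally show ?case .
qed

lemma kron_mult:
  fixes H :: "real mat"
  shows "(\<forall>v\<in>set vs. v \<in> carrier_vec (dim_col H)) \<Longrightarrow>
    diag_block_mat (replicate (length vs) H) *\<^sub>v foldr (@\<^sub>v) vs (vec 0 f) = foldr (@\<^sub>v) (map (\<lambda>v. H *\<^sub>v v) vs) (vec 0 f)"
proof (induction vs)
  case Nil
  show ?case by (rule eq_vecI) auto
next
  case (Cons v vs)
  define Bm where "Bm = diag_block_mat (replicate (length vs) H)"
  have dB: "dim_row Bm = length vs * dim_row H" "dim_col Bm = length vs * dim_col H"
    unfolding Bm_def dim_diag_block_mat map_replicate sum_list_replicate by simp_all
  have Bm: "Bm \<in> carrier_mat (dim_row Bm) (dim_col Bm)" by (rule carrier_matI) auto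
  have Hc: "H \<in> carrier_mat (dim_row H) (dim_col H)" by (rule carrier_matI) auto
  have v: "v \<in> carrier_vec (dim_col H)" using Cons.prems by simp
  have r: "foldr (@\<^sub>v) vs (vec 0 f) \<in> carrier_vec (dim_col Bm)"
    using foldr_append_carrier[of vs "dim_col H" f] Cons.prems dB by simp
  have z1: "0\<^sub>m (dim_row H) (dim_col Bm) \<in> carrier_mat (dim_row H) (dim_col Bm)" by simp
  have z2: "0\<^sub>m (dim_row Bm) (dim_col H) \<in> carrier_mat (dim_row Bm) (dim_col H)" by simp
  have e0: "diag_block_mat (replicate (length (v # vs)) H) = four_block_mat H (0\<^sub>m (dim_row H) (dim_col Bm)) (0\<^sub>m (dim_row Bm) (dim_col H)) Bm"
    by (simp add: Bm_def Let_def)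
  have "diag_block_mat (replicate (length (v # vs)) H) *\<^sub>v foldr (@\<^sub>v) (v # vs) (vec 0 f)
     = four_block_mat H (0\<^sub>m (dim_row H) (dim_col Bm)) (0\<^sub>m (dim_row Bm) (dim_col H)) Bm *\<^sub>v (v @\<^sub>v foldr (@\<^sub>v) vs (vec 0 f))"
    unfolding e0 by simp
  also have "\<dots> = (H *\<^sub>v v + 0\<^sub>m (dim_row H) (dim_col Bm) *\<^sub>v foldr (@\<^sub>v) vs (vec 0 f)) @\<^sub>v
       (0\<^sub>m (dim_row Bm) (dim_col H) *\<^sub>v v + Bm *\<^sub>v foldr (@\<^sub>v) vs (vec 0 f))"
    by (rule four_block_mat_mult_vec[OF Hc z1 z2 Bm v r])
  also have "H *\<^sub>v v + 0\<^sub>m (dim_row H) (dim_col Bm) *\<^sub>v foldr (@\<^sub>v) vs (vec 0 f) = H *\<^sub>v v"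
    using r by (intro eq_vecI) auto
  also have "0\<^sub>m (dim_row Bm) (dim_col H) *\<^sub>v v + Bm *\<^sub>v foldr (@\<^sub>v) vs (vec 0 f) = Bm *\<^sub>v foldr (@\<^sub>v) vs (vec 0 f)"
    using v by (intro eq_vecI) auto
  also have "Bm *\<^sub>v foldr (@\<^sub>v) vs (vec 0 f) = foldr (@\<^sub>v) (map (\<lambda>v. H *\<^sub>v v) vs) (vec 0 f)"
    unfolding Bm_def using Cons by simp
  finally show ?case by simp
qed

lemma vstack_mult:
  fixes X Y :: "real mat"
  assumes dY: "dim_col Y = dim_col X" and S: "S \<in> carrier_vec (dim_col X)"
  shows "vstack X Y *\<^sub>v S = (X *\<^sub>v S) @\<^sub>v (Y *\<^sub>v S)"
proof (rule eq_vecI)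
  fix i assume "i < dim_vec ((X *\<^sub>v S) @\<^sub>v (Y *\<^sub>v S))"
  hence i: "i < dim_row X + dim_row Y" by simp
  have dS: "dim_vec S = dim_col X" using S by auto
  have row: "row (vstack X Y) i = (if i < dim_row X then row X i else row Y (i - dim_row X))"
    using i dY by (intro eq_vecI) (auto simp: vstack_def four_block_mat_def Let_def)
  show "(vstack X Y *\<^sub>v S) $ i = ((X *\<^sub>v S) @\<^sub>v (Y *\<^sub>v S)) $ i"
    using i row dS by (simp add: vstack_def four_block_mat_def Let_def)
qed (simp add: vstack_def four_block_mat_def Let_def)

lemma bdiag_mult:
  fixes X Y :: "real mat"
  assumes a: "a \<in> carrier_vec (dim_col X)" and b: "b \<in> carrier_vec (dim_col Y)"
  shows "bdiag X Y *\<^sub>v (a @\<^sub>v b) = (X *\<^sub>v a) @\<^sub>v (Y *\<^sub>v b)"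
proof -
  have Xc: "X \<in> carrier_mat (dim_row X) (dim_col X)" by (rule carrier_matI) auto
  have Yc: "Y \<in> carrier_mat (dim_row Y) (dim_col Y)" by (rule carrier_matI) auto
  have z1: "0\<^sub>m (dim_row X) (dim_col Y) \<in> carrier_mat (dim_row X) (dim_col Y)" by simp
  have z2: "0\<^sub>m (dim_row Y) (dim_col X) \<in> carrier_mat (dim_row Y) (dim_col X)" by simp
  have "bdiag X Y *\<^sub>v (a @\<^sub>v b) = (X *\<^sub>v a + 0\<^sub>m (dim_row X) (dim_col Y) *\<^sub>v b) @\<^sub>v
       (0\<^sub>m (dim_row Y) (dim_col X) *\<^sub>v a + Y *\<^sub>v b)"
    unfolding bdiag_def by (rule four_block_mat_mult_vec[OF Xc z1 z2 Yc a b])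
  also have "X *\<^sub>v a + 0\<^sub>m (dim_row X) (dim_col Y) *\<^sub>v b = X *\<^sub>v a" using b by (intro eq_vecI) auto
  also have "0\<^sub>m (dim_row Y) (dim_col X) *\<^sub>v a + Y *\<^sub>v b = Y *\<^sub>v b" using a by (intro eq_vecI) auto
  finally show ?thesis .
qed

lemma append_vec_assoc: "(a @\<^sub>v b) @\<^sub>v c = a @\<^sub>v (b @\<^sub>v (c :: real vec))"
  by (rule eq_vecI) auto

lemma app_empty_right: "dim_vec w = 0 \<Longrightarrow> v @\<^sub>v w = (v :: real vec)"
  by (rule eq_vecI) auto

lemma app_empty_left: "dim_vec v = 0 \<Longrightarrow> v @\<^sub>v w = (w :: real vec)"
  by (rule eq_vecI) auto

lemma upart:
  fixes f :: "nat \<Rightarrow> real vec" and \<alpha> :: "nat \<Rightarrow> real vec"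
  assumes xi1: "1 \<le> xi" and Ln: "n \<le> L" and NL: "L + n \<le> N"
    and ac: "\<forall>i\<in>{1..xi}. \<alpha> i \<in> carrier_vec (N - L + 1)"
  shows "vstack (bdiag (hankel d L N f) (0\<^sub>m 0 ((xi - 1) * (N - L + 1))))
      (bdiag (0\<^sub>m 0 (N - L + 1)) (kron_id (xi - 1) (hankel d (L - n) (N - n) (subseq f n)))) *\<^sub>v stack_vecs \<alpha> xi
   = flat d L (lc d (N-L+1) (\<alpha> 1) f) @\<^sub>v
     foldr (@\<^sub>v) (map (\<lambda>i. flat d (L-n) (\<lambda>k. lc d (N-L+1) (\<alpha> i) f (n + k))) [2..<2 + (xi-1)]) (vec 0 (\<lambda>_. 0))"
proof -
  define M where "M = N - L + 1"
  define R where "R = foldr (@\<^sub>v) (map \<alpha> [2..<xi+1]) (vec 0 (\<lambda>_. 0))"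
  define H1 where "H1 = hankel d L N f"
  define Hk where "Hk = hankel d (L - n) (N - n) (subseq f n)"
  define K where "K = kron_id (xi - 1) Hk"
  have MM: "N - n - (L - n) + 1 = M" using Ln NL by (simp add: M_def)
  have a1: "\<alpha> 1 \<in> carrier_vec M" using ac xi1 by (simp add: M_def)
  have ups: "[1..<xi+1] = 1 # [2..<xi+1]"
  proof -
    have "[1..<xi+1] = 1 # [Suc 1..<xi+1]" by (rule upt_conv_Cons) (use xi1 in simp)
    thus ?thesis unfolding Suc_1 .
  qed
  have S: "stack_vecs \<alpha> xi = \<alpha> 1 @\<^sub>v R" unfolding stack_vecs_def R_def ups by simp
  have aset: "\<forall>v\<in>set (map \<alpha> [2..<xi+1]). v \<in> carrier_vec M" using ac by (auto simp: M_def)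
  have R0: "R \<in> carrier_vec (length (map \<alpha> [2..<xi+1]) * M)"
    unfolding R_def by (rule foldr_append_carrier[OF aset])
  have len: "length (map \<alpha> [2..<xi+1]) = xi - 1" by (simp only: length_map length_upt)
  have R: "R \<in> carrier_vec ((xi - 1) * M)" using R0 unfolding len .
  have dH1: "dim_col H1 = M" "dim_row H1 = d * L" by (simp_all add: H1_def hankel_def M_def)
  have dHk: "dim_col Hk = M" using MM by (simp add: Hk_def hankel_def)
  have dK: "dim_col K = (xi - 1) * M"
    unfolding K_def kron_id_def dim_diag_block_mat map_replicate sum_list_replicate dHk by simp
  have "vstack (bdiag H1 (0\<^sub>m 0 ((xi - 1) * M))) (bdiag (0\<^sub>m 0 M) K) *\<^sub>v (\<alpha> 1 @\<^sub>v R)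
      = (bdiag H1 (0\<^sub>m 0 ((xi - 1) * M)) *\<^sub>v (\<alpha> 1 @\<^sub>v R)) @\<^sub>v (bdiag (0\<^sub>m 0 M) K *\<^sub>v (\<alpha> 1 @\<^sub>v R))"
    by (rule vstack_mult) (use dH1 dK a1 R in \<open>auto simp: bdiag_def\<close>)
  also have "bdiag H1 (0\<^sub>m 0 ((xi - 1) * M)) *\<^sub>v (\<alpha> 1 @\<^sub>v R) = (H1 *\<^sub>v \<alpha> 1) @\<^sub>v (0\<^sub>m 0 ((xi - 1) * M) *\<^sub>v R)"
    by (rule bdiag_mult) (use dH1 a1 R in auto)
  also have "\<dots> = H1 *\<^sub>v \<alpha> 1" by (rule app_empty_right) simp
  also have "bdiag (0\<^sub>m 0 M) K *\<^sub>v (\<alpha> 1 @\<^sub>v R) = (0\<^sub>m 0 M *\<^sub>v \<alpha> 1) @\<^sub>v (K *\<^sub>v R)"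
    by (rule bdiag_mult) (use dK a1 R in auto)
  also have "\<dots> = K *\<^sub>v R" by (rule app_empty_left) simp
  also have "H1 *\<^sub>v \<alpha> 1 = flat d L (lc d M (\<alpha> 1) f)"
    unfolding H1_def M_def by (rule hankel_mult) (use a1 in \<open>simp add: M_def\<close>)
  also have "K *\<^sub>v R = foldr (@\<^sub>v) (map (\<lambda>v. Hk *\<^sub>v v) (map \<alpha> [2..<xi+1])) (vec 0 (\<lambda>_. 0))"
  proof -
    from len show ?thesis unfolding K_def kron_id_def R_def
      using kron_mult[of "map \<alpha> [2..<xi+1]" Hk] aset dHk by simp
  qed
  also have "map (\<lambda>v. Hk *\<^sub>v v) (map \<alpha> [2..<xi+1]) = map (\<lambda>i. flat d (L-n) (\<lambda>k. lc d M (\<alpha> i) f (n + k))) [2..<2 + (xi-1)]"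
  proof -
    have e: "[2..<xi+1] = [2..<2 + (xi-1)]" using xi1 by simp
    show ?thesis unfolding e map_map
    proof (rule map_cong[OF refl])
      fix i assume "i \<in> set [2..<2 + (xi-1)]"
      hence ai: "\<alpha> i \<in> carrier_vec (N - n - (L - n) + 1)" using ac MM by (auto simp: M_def)
      show "((*\<^sub>v) Hk \<circ> \<alpha>) i = flat d (L-n) (\<lambda>k. lc d M (\<alpha> i) f (n + k))"
      proof -
        have ls: "lc d M (\<alpha> i) (subseq f n) = (\<lambda>k. lc d M (\<alpha> i) f (n + k))"
          by (rule ext) (rule lc_subseq)
        show ?thesis using hankel_mult[OF ai, of d "subseq f n"] MM unfolding Hk_def by (simp add: ls)
      qed
    qed
  qed
  finally show ?thesis unfolding S H1_def Hk_def K_def M_def by simp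
qed

lemma upart_eq:
  fixes f fb :: "nat \<Rightarrow> real vec" and \<alpha> :: "nat \<Rightarrow> real vec"
  assumes xi1: "1 \<le> xi" and Ln: "n \<le> L" and NL: "L + n \<le> N" and L1: "1 \<le> L"
    and ac: "\<forall>i\<in>{1..xi}. \<alpha> i \<in> carrier_vec (N - L + 1)"
  shows "(vstack (bdiag (hankel d L N f) (0\<^sub>m 0 ((xi - 1) * (N - L + 1))))
      (bdiag (0\<^sub>m 0 (N - L + 1)) (kron_id (xi - 1) (hankel d (L - n) (N - n) (subseq f n)))) *\<^sub>v stack_vecs \<alpha> xi
      = stack d fb 0 (L + (xi - 1) * (L - n) - 1))
   \<longleftrightarrow> (\<forall>k<L. \<forall>s<d. lc d (N-L+1) (\<alpha> 1) f k $ s = fb k $ s) \<and>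
       (\<forall>i<xi - 1. \<forall>k<L - n. \<forall>s<d. lc d (N-L+1) (\<alpha> (2 + i)) f (n + k) $ s = fb (L + (i * (L - n) + k)) $ s)"
proof -
  have st: "stack d fb 0 (L + (xi - 1) * (L - n) - 1) = flat d L fb @\<^sub>v flat d ((xi - 1) * (L - n)) (\<lambda>k. fb (L + k))"
    using stack_flat[of "L + (xi - 1) * (L - n)" d fb] L1 flat_append[of d L fb "(xi - 1) * (L - n)"] by simp
  have e1: "(flat d L (lc d (N-L+1) (\<alpha> 1) f) @\<^sub>v
     foldr (@\<^sub>v) (map (\<lambda>i. flat d (L-n) (\<lambda>k. lc d (N-L+1) (\<alpha> i) f (n + k))) [2..<2 + (xi-1)]) (vec 0 (\<lambda>_. 0))
     = flat d L fb @\<^sub>v flat d ((xi - 1) * (L - n)) (\<lambda>k. fb (L + k))) \<longleftrightarrow>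
     (flat d L (lc d (N-L+1) (\<alpha> 1) f) = flat d L fb \<and>
      foldr (@\<^sub>v) (map (\<lambda>i. flat d (L-n) (\<lambda>k. lc d (N-L+1) (\<alpha> i) f (n + k))) [2..<2 + (xi-1)]) (vec 0 (\<lambda>_. 0))
      = flat d ((xi - 1) * (L - n)) (\<lambda>k. fb (L + k)))"
    by (rule append_vec_eq[where n = "d * L"]) simp_all
  show ?thesis
    unfolding upart[OF xi1 Ln NL ac] st e1 flat_eq foldr_flat_eq
    by (simp del: lc_index)
qed

lemma block_len:
  fixes d :: nat
  assumes ac: "\<forall>i\<in>{1..xi}. \<alpha> i \<in> carrier_vec M"
  shows "foldr (@\<^sub>v) (map (\<lambda>i. flat d K (g i)) [a..<a + c]) (vec 0 f) \<in> carrier_vec (c * (d * K))"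
  using foldr_append_carrier[of "map (\<lambda>i. flat d K (g i)) [a..<a + c]" "d * K" f] by auto

lemma cover:
  fixes t L n xi :: nat
  assumes t: "t < L + (xi - 1) * (L - n)" and xi1: "1 \<le> xi" and Ln: "n \<le> L"
  shows "\<exists>i k. 1 \<le> i \<and> i \<le> xi \<and> k < L \<and> t = (i - 1) * (L - n) + k"
proof (cases "L = n")
  case True
  show ?thesis
  proof (rule exI[of _ 1], rule exI[of _ t])
    have e0: "L + (xi - 1) * (L - n) = L" using True by simp
    have tL: "t < L" using t e0 by linarith
    show "1 \<le> (1::nat) \<and> 1 \<le> xi \<and> t < L \<and> t = (1 - 1) * (L - n) + t" using tL xi1 by simp
  qed
next
  case False
  define q where "q = L - n"
  have q0: "0 < q" using False Ln by (simp add: q_def)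
  define b where "b = min (t div q) (xi - 1)"
  have bq: "b * q \<le> t"
  proof -
    have "b * q \<le> (t div q) * q" by (simp add: b_def)
    also have "\<dots> \<le> t" by simp
    finally show ?thesis .
  qed
  have kL: "t - b * q < L"
  proof (cases "t div q \<le> xi - 1")
    case True
    hence "b = t div q" by (simp add: b_def)
    hence "t - b * q = t mod q" by (simp add: minus_div_mult_eq_mod)
    also have "\<dots> < q" using q0 by simp
    also have "q \<le> L" by (simp add: q_def)
    finally show ?thesis .
  next
    case False
    hence "b = xi - 1" by (simp add: b_def)
    define P where "P = (xi - 1) * (L - n)"
    have bP: "b * q = P" using \<open>b = xi - 1\<close> by (simp add: q_def P_def)
    have tP: "t < L + P" using t by (simp add: P_def)
    have L0: "0 < L" using q0 by (simp add: q_def)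
    have "t - P < L" using tP L0 by arith
    thus ?thesis unfolding bP .
  qed
  have bx: "b + 1 \<le> xi" using xi1 by (simp add: b_def)
  show ?thesis
  proof (rule exI[of _ "b + 1"], rule exI[of _ "t - b * q"])
    show "1 \<le> b + 1 \<and> b + 1 \<le> xi \<and> t - b * q < L \<and> t = (b + 1 - 1) * (L - n) + (t - b * q)"
      using bx kL bq by (simp add: q_def)
  qed
qed

lemma win_equiv:
  fixes g :: "nat \<Rightarrow> nat \<Rightarrow> real vec" and fb :: "nat \<Rightarrow> real vec"
  assumes Ln: "n \<le> L" and xi1: "1 \<le> xi"
  shows "((\<forall>k<L. \<forall>s<d. g 1 k $ s = fb k $ s) \<and>
          (\<forall>i<xi - 1. \<forall>k<L - n. \<forall>s<d. g (2 + i) (n + k) $ s = fb (L + (i * (L - n) + k)) $ s) \<and>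
          (\<forall>i\<in>{1..xi - 1}. \<forall>k<n. \<forall>s<d. g i (L - n + k) $ s = g (i + 1) k $ s))
     \<longleftrightarrow> (\<forall>i\<in>{1..xi}. \<forall>k<L. \<forall>s<d. fb ((i - 1) * (L - n) + k) $ s = g i k $ s)"
proof -
  obtain q where q: "L = n + q" using Ln le_Suc_ex by blast
  have Lq: "L - n = q" using q by simp
  show ?thesis
proof
  assume h: "(\<forall>k<L. \<forall>s<d. g 1 k $ s = fb k $ s) \<and>
          (\<forall>i<xi - 1. \<forall>k<L - n. \<forall>s<d. g (2 + i) (n + k) $ s = fb (L + (i * (L - n) + k)) $ s) \<and>
          (\<forall>i\<in>{1..xi - 1}. \<forall>k<n. \<forall>s<d. g i (L - n + k) $ s = g (i + 1) k $ s)"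
  hence h1: "\<And>k s. k < L \<Longrightarrow> s < d \<Longrightarrow> g 1 k $ s = fb k $ s"
    and h2: "\<And>i k s. i < xi - 1 \<Longrightarrow> k < L - n \<Longrightarrow> s < d \<Longrightarrow> g (2 + i) (n + k) $ s = fb (L + (i * (L - n) + k)) $ s"
    and h3: "\<And>i k s. 1 \<le> i \<Longrightarrow> i \<le> xi - 1 \<Longrightarrow> k < n \<Longrightarrow> s < d \<Longrightarrow> g i (L - n + k) $ s = g (i + 1) k $ s"
    by auto
  have main: "\<forall>k<L. \<forall>s<d. fb (i' * (L - n) + k) $ s = g (Suc i') k $ s" if "Suc i' \<le> xi" for i'
    using that
  proof (induction i')
    case 0 then show ?case using h1 by simp
  next
    case (Suc i')
    show ?case
    proof (intro allI impI)
      fix k s assume k: "k < L" and s: "s < d"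
      show "fb (Suc i' * (L - n) + k) $ s = g (Suc (Suc i')) k $ s"
      proof (cases "n \<le> k")
        case True
        define k' where "k' = k - n"
        have k': "k' < L - n" "k = n + k'" using True k by (auto simp: k'_def)
        have "Suc i' * (L - n) + k = L + (i' * (L - n) + k')" using k' q by (simp add: Lq algebra_simps)
        moreover have "g (2 + i') (n + k') $ s = fb (L + (i' * (L - n) + k')) $ s"
          using h2[of i' k' s] k' s Suc.prems by simp
        ultimately show ?thesis using k' by (simp add: numeral_2_eq_2)
      next
        case False
        hence kn: "k < n" by simp
        have e: "Suc i' * (L - n) + k = i' * (L - n) + (L - n + k)" by simp
        have IH': "\<forall>k<L. \<forall>s<d. fb (i' * (L - n) + k) $ s = g (Suc i') k $ s"
          using Suc.IH Suc.prems by simp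
        have lt: "L - n + k < L" using kn Ln by simp
        have "fb (i' * (L - n) + (L - n + k)) $ s = g (Suc i') (L - n + k) $ s"
          using IH' lt s by blast
        also have "\<dots> = g (Suc (Suc i')) k $ s" using h3[of "Suc i'" k s] Suc.prems kn s by simp
        finally have X: "fb (i' * (L - n) + (L - n + k)) $ s = g (Suc (Suc i')) k $ s" .
        show ?thesis by (simp only: e X)
      qed
    qed
  qed
  show "\<forall>i\<in>{1..xi}. \<forall>k<L. \<forall>s<d. fb ((i - 1) * (L - n) + k) $ s = g i k $ s"
  proof (intro ballI allI impI)
    fix i k s assume i: "i \<in> {1..xi}" and k: "k < L" and s: "s < d"
    obtain i' where "i = Suc i'" using i by (cases i) auto
    thus "fb ((i - 1) * (L - n) + k) $ s = g i k $ s" using main[of i'] i k s by simp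
  qed
next
  assume h: "\<forall>i\<in>{1..xi}. \<forall>k<L. \<forall>s<d. fb ((i - 1) * (L - n) + k) $ s = g i k $ s"
  hence h': "\<And>i k s. 1 \<le> i \<Longrightarrow> i \<le> xi \<Longrightarrow> k < L \<Longrightarrow> s < d \<Longrightarrow> fb ((i - 1) * (L - n) + k) $ s = g i k $ s"
    by auto
  have c1: "\<forall>k<L. \<forall>s<d. g 1 k $ s = fb k $ s" using h'[of 1] xi1 by simp
  have c2: "\<forall>i<xi - 1. \<forall>k<L - n. \<forall>s<d. g (2 + i) (n + k) $ s = fb (L + (i * (L - n) + k)) $ s"
  proof (intro allI impI)
    fix i k s assume i: "i < xi - 1" and k: "k < L - n" and s: "s < d"
    have "fb ((2 + i - 1) * (L - n) + (n + k)) $ s = g (2 + i) (n + k) $ s"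
      using h'[of "2 + i" "n + k" s] i k s by simp
    moreover have "(2 + i - 1) * (L - n) + (n + k) = L + (i * (L - n) + k)" using q by (simp add: Lq algebra_simps)
    ultimately show "g (2 + i) (n + k) $ s = fb (L + (i * (L - n) + k)) $ s" by simp
  qed
  have c3: "\<forall>i\<in>{1..xi - 1}. \<forall>k<n. \<forall>s<d. g i (L - n + k) $ s = g (i + 1) k $ s"
  proof (intro ballI allI impI)
    fix i k s assume i: "i \<in> {1..xi - 1}" and k: "k < n" and s: "s < d"
    have lt: "L - n + k < L" using k Ln by simp
    have i1: "1 \<le> i" "i \<le> xi" "1 \<le> i + 1" "i + 1 \<le> xi" using i by auto
    have kL: "k < L" using k Ln by simp
    have A1: "fb ((i - 1) * (L - n) + (L - n + k)) $ s = g i (L - n + k) $ s"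
      by (rule h'[OF i1(1,2) lt s])
    have A2: "fb ((i + 1 - 1) * (L - n) + k) $ s = g (i + 1) k $ s"
      by (rule h'[OF i1(3,4) kL s])
    have E: "(i - 1) * (L - n) + (L - n + k) = (i + 1 - 1) * (L - n) + k" using i
      by (cases i) (auto simp: Lq algebra_simps)
    show "g i (L - n + k) $ s = g (i + 1) k $ s" using A1 A2 E by metis
  qed
  show "(\<forall>k<L. \<forall>s<d. g 1 k $ s = fb k $ s) \<and>
          (\<forall>i<xi - 1. \<forall>k<L - n. \<forall>s<d. g (2 + i) (n + k) $ s = fb (L + (i * (L - n) + k)) $ s) \<and>
          (\<forall>i\<in>{1..xi - 1}. \<forall>k<n. \<forall>s<d. g i (L - n + k) $ s = g (i + 1) k $ s)"
    using c1 c2 c3 by blast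
qed
qed

lemma obs_uniq2:
  fixes A B C D :: "real mat"
  assumes "A \<in> carrier_mat n n" "B \<in> carrier_mat n m"
    "C \<in> carrier_mat p n" "D \<in> carrier_mat p m"
    "mrank (obsv_mat n p A C) = n"
    "P 0 \<in> carrier_vec n" "Q 0 \<in> carrier_vec n"
    "\<forall>k<n. V k \<in> carrier_vec m \<and> P (Suc k) = A *\<^sub>v P k + B *\<^sub>v V k
       \<and> Q (Suc k) = A *\<^sub>v Q k + B *\<^sub>v V k \<and> C *\<^sub>v P k + D *\<^sub>v V k = C *\<^sub>v Q k + D *\<^sub>v V k"
  shows "P 0 = Q 0"
  using obs_unique[OF assms] .

context sysd begin

lemma traj_to_win:
  fixes L xi T :: nat and ub yb :: "nat \<Rightarrow> real vec"
  assumes ctrb: "mrank (ctrb_mat n m A B) = n"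
    and pe: "persistently_exciting m N u (L + n)"
    and NL: "L + n \<le> N" and Ln: "n \<le> L" and xi1: "1 \<le> xi"
    and T: "T = L + (xi - 1) * (L - n)"
    and tr: "is_trajectory n m p A B C D T ub yb"
  shows "\<exists>\<alpha>. (\<forall>i\<in>{1..xi}. \<alpha> i \<in> carrier_vec (N - L + 1)) \<and>
     (\<forall>i\<in>{1..xi}. \<forall>k<L. ub ((i - 1) * (L - n) + k) = lc m (N - L + 1) (\<alpha> i) u k \<and>
                          yb ((i - 1) * (L - n) + k) = lc p (N - L + 1) (\<alpha> i) y k)"
proof -
  from tr obtain xb where ubc: "\<forall>k<T. ub k \<in> carrier_vec m \<and> yb k \<in> carrier_vec p"
    and xb0: "xb 0 \<in> carrier_vec n"
    and dynb: "\<forall>k<T. xb (Suc k) = A *\<^sub>v xb k + B *\<^sub>v ub k \<and> yb k = C *\<^sub>v xb k + D *\<^sub>v ub k"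
    unfolding is_trajectory_def by blast
  have xbc: "xb k \<in> carrier_vec n" if "k \<le> T" for k
    using that
  proof (induction k)
    case 0 then show ?case using xb0 by simp
  next
    case (Suc k)
    hence "k < T" by simp
    thus ?case using dynb Suc A B ubc by auto
  qed
  define M where "M = N - L + 1"
  have kM: "k + M \<le> N" if "k < L" for k using that NL by (simp add: M_def)
  have ex: "\<exists>a. a \<in> carrier_vec M \<and> (\<forall>k<L. ub ((i - 1) * (L - n) + k) = lc m M a u k \<and>
                          yb ((i - 1) * (L - n) + k) = lc p M a y k)" if i: "i \<in> {1..xi}" for i
  proof -
    define s where "s = (i - 1) * (L - n)"
    have "s \<le> (xi - 1) * (L - n)" unfolding s_def using i by (intro mult_le_mono1) auto
    hence sT: "s + L \<le> T" using T by simp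
    have ub': "\<forall>k<L. ub (s + k) \<in> carrier_vec m" using ubc sT by auto
    obtain a where a: "a \<in> carrier_vec M" "\<forall>k<L. lc m M a u k = ub (s + k)" "lc n M a x 0 = xb s"
      using fund[OF ctrb pe NL ub' xbc[of s]] sT unfolding M_def by auto
    have st: "lc n M a x k = xb (s + k)" if "k \<le> L" for k
      using that
    proof (induction k)
      case 0 then show ?case using a by simp
    next
      case (Suc k)
      hence k: "k < L" by simp
      have "lc n M a x (Suc k) = A *\<^sub>v lc n M a x k + B *\<^sub>v lc m M a u k" using lc_step kM[OF k] by simp
      also have "\<dots> = A *\<^sub>v xb (s + k) + B *\<^sub>v ub (s + k)" using Suc k a by simp
      also have "\<dots> = xb (Suc (s + k))" using dynb sT k by simp
      finally show ?case by simp
    qed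
    have yk: "yb (s + k) = lc p M a y k" if k: "k < L" for k
    proof -
      have "lc p M a y k = C *\<^sub>v lc n M a x k + D *\<^sub>v lc m M a u k" using lc_out kM[OF k] by simp
      also have "\<dots> = C *\<^sub>v xb (s + k) + D *\<^sub>v ub (s + k)" using st k a by simp
      also have "\<dots> = yb (s + k)" using dynb sT k by simp
      finally show ?thesis by simp
    qed
    show ?thesis using a yk unfolding s_def by (intro exI[of _ a]) auto
  qed
  hence "\<forall>i\<in>{1..xi}. \<exists>a. a \<in> carrier_vec M \<and> (\<forall>k<L. ub ((i - 1) * (L - n) + k) = lc m M a u k \<and>
                          yb ((i - 1) * (L - n) + k) = lc p M a y k)" by blast
  then obtain \<alpha> where "\<forall>i\<in>{1..xi}. \<alpha> i \<in> carrier_vec M \<and> (\<forall>k<L. ub ((i - 1) * (L - n) + k) = lc m M (\<alpha> i) u k \<and>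
                          yb ((i - 1) * (L - n) + k) = lc p M (\<alpha> i) y k)"
    by (metis bchoice)
  thus ?thesis unfolding M_def by blast
qed

lemma win_to_traj:
  fixes L xi T :: nat and ub yb \<alpha> :: "nat \<Rightarrow> real vec"
  assumes obs: "mrank (obsv_mat n p A C) = n"
    and NL: "L + n \<le> N" and Ln: "n \<le> L" and xi1: "1 \<le> xi"
    and T: "T = L + (xi - 1) * (L - n)"
    and ubc: "\<forall>k<T. ub k \<in> carrier_vec m" and ybc: "\<forall>k<T. yb k \<in> carrier_vec p"
    and W: "\<forall>i\<in>{1..xi}. \<forall>k<L. ub ((i - 1) * (L - n) + k) = lc m (N - L + 1) (\<alpha> i) u k \<and>
                          yb ((i - 1) * (L - n) + k) = lc p (N - L + 1) (\<alpha> i) y k"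
  shows "is_trajectory n m p A B C D T ub yb"
proof -
  define M where "M = N - L + 1"
  have kM: "k + M \<le> N" if "k < L" for k using that NL by (simp add: M_def)
  have W': "ub ((i - 1) * (L - n) + k) = lc m M (\<alpha> i) u k \<and> yb ((i - 1) * (L - n) + k) = lc p M (\<alpha> i) y k"
    if "1 \<le> i" "i \<le> xi" "k < L" for i k using W that unfolding M_def by auto
  define xb where "xb = rec_nat (lc n M (\<alpha> 1) x 0) (\<lambda>t v. A *\<^sub>v v + B *\<^sub>v ub t)"
  have xb0: "xb 0 = lc n M (\<alpha> 1) x 0" by (simp add: xb_def)
  have xbS: "xb (Suc t) = A *\<^sub>v xb t + B *\<^sub>v ub t" for t by (simp add: xb_def)
  have prp: "xb ((i - 1) * (L - n) + k) = lc n M (\<alpha> i) x k"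
    if i: "1 \<le> i" "i \<le> xi" and init: "xb ((i - 1) * (L - n)) = lc n M (\<alpha> i) x 0" and k: "k \<le> L" for i k
    using k
  proof (induction k)
    case 0 then show ?case using init by simp
  next
    case (Suc k)
    hence k: "k < L" by simp
    have "xb ((i - 1) * (L - n) + Suc k) = A *\<^sub>v xb ((i - 1) * (L - n) + k) + B *\<^sub>v ub ((i - 1) * (L - n) + k)"
      using xbS by simp
    also have "\<dots> = A *\<^sub>v lc n M (\<alpha> i) x k + B *\<^sub>v lc m M (\<alpha> i) u k" using Suc k W'[OF i k] by simp
    also have "\<dots> = lc n M (\<alpha> i) x (Suc k)" using lc_step kM[OF k] by simp
    finally show ?case .
  qed
  have start: "xb (i' * (L - n)) = lc n M (\<alpha> (Suc i')) x 0" if "Suc i' \<le> xi" for i'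
    using that
  proof (induction i')
    case 0 then show ?case using xb0 by simp
  next
    case (Suc i')
    define i where "i = Suc i'"
    define j where "j = Suc (Suc i')"
    have i: "1 \<le> i" "i \<le> xi" and j: "1 \<le> j" "j \<le> xi" using Suc.prems by (auto simp: i_def j_def)
    have IH: "xb ((i - 1) * (L - n)) = lc n M (\<alpha> i) x 0" using Suc by (simp add: i_def)
    have p1: "xb ((i - 1) * (L - n) + (L - n)) = lc n M (\<alpha> i) x (L - n)"
      using prp[OF i IH] by simp
    have idx: "(i - 1) * (L - n) + (L - n + k) = (j - 1) * (L - n) + k" for k
      by (simp add: i_def j_def)
    have uu: "lc m M (\<alpha> i) u (L - n + k) = lc m M (\<alpha> j) u k"
      and yy: "lc p M (\<alpha> i) y (L - n + k) = lc p M (\<alpha> j) y k" if k: "k < n" for k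
    proof -
      have k1: "L - n + k < L" and k2: "k < L" using k Ln by auto
      have a1: "ub ((i - 1) * (L - n) + (L - n + k)) = lc m M (\<alpha> i) u (L - n + k)"
        "yb ((i - 1) * (L - n) + (L - n + k)) = lc p M (\<alpha> i) y (L - n + k)" using W'[OF i k1] by blast+
      have a2: "ub ((j - 1) * (L - n) + k) = lc m M (\<alpha> j) u k"
        "yb ((j - 1) * (L - n) + k) = lc p M (\<alpha> j) y k" using W'[OF j k2] by blast+
      show "lc m M (\<alpha> i) u (L - n + k) = lc m M (\<alpha> j) u k" using a1(1) a2(1) idx[of k] by metis
      show "lc p M (\<alpha> i) y (L - n + k) = lc p M (\<alpha> j) y k" using a1(2) a2(2) idx[of k] by metis
    qed
    have "lc n M (\<alpha> i) x (L - n + 0) = lc n M (\<alpha> j) x 0"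
    proof (rule obs_uniq2[where P = "\<lambda>k. lc n M (\<alpha> i) x (L - n + k)"
          and Q = "\<lambda>k. lc n M (\<alpha> j) x k" and V = "\<lambda>k. lc m M (\<alpha> j) u k", OF A B C D obs])
      show "lc n M (\<alpha> i) x (L - n + 0) \<in> carrier_vec n" by simp
      show "lc n M (\<alpha> j) x 0 \<in> carrier_vec n" by simp
      show "\<forall>k<n. lc m M (\<alpha> j) u k \<in> carrier_vec m \<and>
          lc n M (\<alpha> i) x (L - n + Suc k) = A *\<^sub>v lc n M (\<alpha> i) x (L - n + k) + B *\<^sub>v lc m M (\<alpha> j) u k \<and>
          lc n M (\<alpha> j) x (Suc k) = A *\<^sub>v lc n M (\<alpha> j) x k + B *\<^sub>v lc m M (\<alpha> j) u k \<and>
          C *\<^sub>v lc n M (\<alpha> i) x (L - n + k) + D *\<^sub>v lc m M (\<alpha> j) u k =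
          C *\<^sub>v lc n M (\<alpha> j) x k + D *\<^sub>v lc m M (\<alpha> j) u k"
      proof (intro allI impI conjI)
        fix k assume k: "k < n"
        have k1: "L - n + k < L" and k2: "k < L" using k Ln by auto
        show "lc m M (\<alpha> j) u k \<in> carrier_vec m" by simp
        show "lc n M (\<alpha> i) x (L - n + Suc k) = A *\<^sub>v lc n M (\<alpha> i) x (L - n + k) + B *\<^sub>v lc m M (\<alpha> j) u k"
          using lc_step[OF kM[OF k1], of "\<alpha> i"] uu[OF k] by simp
        show "lc n M (\<alpha> j) x (Suc k) = A *\<^sub>v lc n M (\<alpha> j) x k + B *\<^sub>v lc m M (\<alpha> j) u k"
          using lc_step[OF kM[OF k2]] by simp
        have "C *\<^sub>v lc n M (\<alpha> i) x (L - n + k) + D *\<^sub>v lc m M (\<alpha> j) u k = lc p M (\<alpha> i) y (L - n + k)"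
          using lc_out[OF kM[OF k1], of "\<alpha> i"] uu[OF k] by simp
        also have "\<dots> = lc p M (\<alpha> j) y k" using yy[OF k] .
        also have "\<dots> = C *\<^sub>v lc n M (\<alpha> j) x k + D *\<^sub>v lc m M (\<alpha> j) u k" using lc_out[OF kM[OF k2]] by simp
        finally show "C *\<^sub>v lc n M (\<alpha> i) x (L - n + k) + D *\<^sub>v lc m M (\<alpha> j) u k =
          C *\<^sub>v lc n M (\<alpha> j) x k + D *\<^sub>v lc m M (\<alpha> j) u k" .
      qed
    qed
    hence E': "lc n M (\<alpha> i) x (L - n) = lc n M (\<alpha> j) x 0" by simp
    have "xb (Suc i' * (L - n)) = xb ((i - 1) * (L - n) + (L - n))" by (simp add: i_def add.commute)
    also have "\<dots> = lc n M (\<alpha> i) x (L - n)" by (rule p1)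
    also have "\<dots> = lc n M (\<alpha> j) x 0" by (rule E')
    finally show ?case by (simp add: j_def)
  qed
  have yout: "yb t = C *\<^sub>v xb t + D *\<^sub>v ub t" if t: "t < T" for t
  proof -
    obtain i k where ik: "1 \<le> i" "i \<le> xi" "k < L" "t = (i - 1) * (L - n) + k"
      using cover[of t L xi n] t T xi1 Ln by auto
    obtain i' where i': "i = Suc i'" using ik(1) by (cases i) auto
    have init: "xb ((i - 1) * (L - n)) = lc n M (\<alpha> i) x 0" using start[of i'] ik i' by simp
    have xt: "xb t = lc n M (\<alpha> i) x k" using prp[OF ik(1,2) init, of k] ik by simp
    have "yb t = lc p M (\<alpha> i) y k" using W'[OF ik(1,2,3)] ik(4) by simp
    also have "\<dots> = C *\<^sub>v lc n M (\<alpha> i) x k + D *\<^sub>v lc m M (\<alpha> i) u k" using lc_out kM[OF ik(3)] by simp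
    also have "\<dots> = C *\<^sub>v xb t + D *\<^sub>v ub t" using xt W'[OF ik(1,2,3)] ik(4) by simp
    finally show ?thesis .
  qed
  show ?thesis unfolding is_trajectory_def
  proof (intro conjI allI impI exI[of _ xb])
    fix k assume "k < T" thus "ub k \<in> carrier_vec m" "yb k \<in> carrier_vec p" using ubc ybc by auto
  next
    show "xb 0 \<in> carrier_vec n" using xb0 by simp
  next
    fix k assume "k < T"
    thus "xb (Suc k) = A *\<^sub>v xb k + B *\<^sub>v ub k" "yb k = C *\<^sub>v xb k + D *\<^sub>v ub k" using xbS yout by auto
  qed
qed

end

lemma ov_eq:
  assumes a: "a \<in> carrier_vec (N - L + 1)" and b: "b \<in> carrier_vec (N - L + 1)"
  shows "(hankel d n (N - L + n) (subseq f (L - n)) *\<^sub>v a = hankel d n (N - L + n) f *\<^sub>v b) \<longleftrightarrow>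
    (\<forall>k<n. \<forall>s<d. lc d (N - L + 1) a f (L - n + k) $ s = lc d (N - L + 1) b f k $ s)"
proof -
  have e: "N - L + n - n + 1 = N - L + 1" by simp
  have a': "a \<in> carrier_vec (N - L + n - n + 1)" and b': "b \<in> carrier_vec (N - L + n - n + 1)"
    using a b e by simp_all
  have ls: "lc d (N - L + 1) a (subseq f (L - n)) = (\<lambda>k. lc d (N - L + 1) a f (L - n + k))"
    by (rule ext) (rule lc_subseq)
  show ?thesis
    unfolding hankel_mult[OF a'] hankel_mult[OF b'] e ls flat_eq ..
qed

lemma upart_dims:
  fixes d :: nat and f g :: "nat \<Rightarrow> real vec"
  shows "dim_row (vstack (bdiag (hankel d L N f) (0\<^sub>m 0 K1)) (bdiag (0\<^sub>m 0 K2) (kron_id k (hankel d L' N' g))))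
      = d * L + k * (d * L')"
    and "dim_col (vstack (bdiag (hankel d L N f) (0\<^sub>m 0 K1)) (bdiag (0\<^sub>m 0 K2) (kron_id k (hankel d L' N' g))))
      = (N - L + 1) + K1"
  by (simp_all add: vstack_def bdiag_def kron_id_def dim_diag_block_mat map_replicate sum_list_replicate
      hankel_def Let_def)

lemma bdiag_dims: "dim_col (bdiag X Y) = dim_col X + dim_col Y" "dim_row (bdiag X Y) = dim_row X + dim_row Y"
  by (simp_all add: bdiag_def)

lemma vstack_dims: "dim_col (vstack X Y) = dim_col X" "dim_row (vstack X Y) = dim_row X + dim_row Y"
  by (simp_all add: vstack_def)

theorem proposition1:
  fixes n m p L xi N :: nat
    and A B C D :: "real mat"
    and u y ubar ybar :: "nat \<Rightarrow> real vec"
  assumes minimal: "minimal_realization n m p A B C D"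
    and L1: "L \<ge> 1"
    and LgE: "L \<ge> n"
    and xi1: "xi \<ge> 1"
    and NL: "L + n \<le> N"
    and traj: "is_trajectory n m p A B C D N u y"
    and pe: "persistently_exciting m N u (L + n)"
    and ubar_dim: "\<forall>k < xi * L - (xi - 1) * n. ubar k \<in> carrier_vec m"
    and ybar_dim: "\<forall>k < xi * L - (xi - 1) * n. ybar k \<in> carrier_vec p"
  shows "is_trajectory n m p A B C D (xi * L - (xi - 1) * n) ubar ybar \<longleftrightarrow>
    (\<exists>\<alpha> :: nat \<Rightarrow> real vec.
       (\<forall>i\<in>{1..xi}. \<alpha> i \<in> carrier_vec (N - L + 1)) \<and>
       vstack
         (vstack
           (vstack
             (bdiag (hankel m L N u) (0\<^sub>m 0 ((xi - 1) * (N - L + 1))))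
             (bdiag (0\<^sub>m 0 (N - L + 1)) (kron_id (xi - 1) (hankel m (L - n) (N - n) (subseq u n)))))
           (bdiag (hankel p L N y) (0\<^sub>m 0 ((xi - 1) * (N - L + 1)))))
         (bdiag (0\<^sub>m 0 (N - L + 1)) (kron_id (xi - 1) (hankel p (L - n) (N - n) (subseq y n))))
       *\<^sub>v stack_vecs \<alpha> xi
       = stack m ubar 0 (xi * L - (xi - 1) * n - 1) @\<^sub>v stack p ybar 0 (xi * L - (xi - 1) * n - 1) \<and>
       (\<forall>i\<in>{1..xi - 1}.
          hankel m n (N - L + n) (subseq u (L - n)) *\<^sub>v \<alpha> i = hankel m n (N - L + n) u *\<^sub>v \<alpha> (i + 1) \<and>
          hankel p n (N - L + n) (subseq y (L - n)) *\<^sub>v \<alpha> i = hankel p n (N - L + n) y *\<^sub>v \<alpha> (i + 1)))"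
proof -
  have A: "A \<in> carrier_mat n n" and B: "B \<in> carrier_mat n m" and C: "C \<in> carrier_mat p n"
    and D: "D \<in> carrier_mat p m" and ctrb: "mrank (ctrb_mat n m A B) = n"
    and obs: "mrank (obsv_mat n p A C) = n"
    using minimal unfolding minimal_realization_def by auto
  from traj obtain x where uyc: "\<forall>k<N. u k \<in> carrier_vec m \<and> y k \<in> carrier_vec p"
    and x0: "x 0 \<in> carrier_vec n"
    and dyn: "\<forall>k<N. x (Suc k) = A *\<^sub>v x k + B *\<^sub>v u k \<and> y k = C *\<^sub>v x k + D *\<^sub>v u k"
    unfolding is_trajectory_def by blast
  interpret sysd n m p A B C D N u y x
    by unfold_locales (use A B C D x0 uyc dyn in auto)
  define T where "T = xi * L - (xi - 1) * n"
  have T_eq: "T = L + (xi - 1) * (L - n)"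
  proof -
    obtain k where k: "xi = Suc k" using xi1 by (cases xi) auto
    have "k * n \<le> k * L" using LgE by simp
    moreover have "k * (L - n) = k * L - k * n" by (simp add: diff_mult_distrib2)
    ultimately show ?thesis unfolding T_def k by simp
  qed
  have T1: "1 \<le> T" using T_eq L1 by simp
  define M where "M = N - L + 1"
  define S where "S = (\<lambda>\<alpha> :: nat \<Rightarrow> real vec. stack_vecs \<alpha> xi)"
  define Uu where "Uu = vstack (bdiag (hankel m L N u) (0\<^sub>m 0 ((xi - 1) * M)))
             (bdiag (0\<^sub>m 0 M) (kron_id (xi - 1) (hankel m (L - n) (N - n) (subseq u n))))"
  define Uy where "Uy = vstack (bdiag (hankel p L N y) (0\<^sub>m 0 ((xi - 1) * M)))
             (bdiag (0\<^sub>m 0 M) (kron_id (xi - 1) (hankel p (L - n) (N - n) (subseq y n))))"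
  define Win where "Win = (\<lambda>\<alpha> :: nat \<Rightarrow> real vec. \<forall>i\<in>{1..xi}. \<forall>k<L.
       ubar ((i - 1) * (L - n) + k) = lc m M (\<alpha> i) u k \<and> ybar ((i - 1) * (L - n) + k) = lc p M (\<alpha> i) y k)"
  have LHS: "is_trajectory n m p A B C D T ubar ybar \<longleftrightarrow>
      (\<exists>\<alpha>. (\<forall>i\<in>{1..xi}. \<alpha> i \<in> carrier_vec M) \<and> Win \<alpha>)"
  proof
    assume tr: "is_trajectory n m p A B C D T ubar ybar"
    show "\<exists>\<alpha>. (\<forall>i\<in>{1..xi}. \<alpha> i \<in> carrier_vec M) \<and> Win \<alpha>"
      unfolding Win_def M_def by (rule traj_to_win[OF ctrb pe NL LgE xi1 T_eq tr])
  next
    assume "\<exists>\<alpha>. (\<forall>i\<in>{1..xi}. \<alpha> i \<in> carrier_vec M) \<and> Win \<alpha>"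
    then obtain \<alpha> where W: "Win \<alpha>" by blast
    have ubc: "\<forall>k<T. ubar k \<in> carrier_vec m" "\<forall>k<T. ybar k \<in> carrier_vec p"
      using ubar_dim ybar_dim unfolding T_def by auto
    show "is_trajectory n m p A B C D T ubar ybar"
      by (rule win_to_traj[OF obs NL LgE xi1 T_eq ubc W[unfolded Win_def M_def]])
  qed
  have key: "(vstack (vstack Uu (bdiag (hankel p L N y) (0\<^sub>m 0 ((xi - 1) * M))))
         (bdiag (0\<^sub>m 0 M) (kron_id (xi - 1) (hankel p (L - n) (N - n) (subseq y n))))
       *\<^sub>v S \<alpha> = stack m ubar 0 (T - 1) @\<^sub>v stack p ybar 0 (T - 1) \<and>
       (\<forall>i\<in>{1..xi - 1}.
          hankel m n (N - L + n) (subseq u (L - n)) *\<^sub>v \<alpha> i = hankel m n (N - L + n) u *\<^sub>v \<alpha> (i + 1) \<and>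
          hankel p n (N - L + n) (subseq y (L - n)) *\<^sub>v \<alpha> i = hankel p n (N - L + n) y *\<^sub>v \<alpha> (i + 1)))
     \<longleftrightarrow> Win \<alpha>"
    if ac: "\<forall>i\<in>{1..xi}. \<alpha> i \<in> carrier_vec M" for \<alpha>
  proof -
    have ac': "\<forall>i\<in>{1..xi}. \<alpha> i \<in> carrier_vec (N - L + 1)" using ac by (simp add: M_def)
    have Sc: "S \<alpha> \<in> carrier_vec (M + (xi - 1) * M)"
    proof -
      have "S \<alpha> \<in> carrier_vec (length (map \<alpha> [1..<xi+1]) * M)"
        unfolding S_def stack_vecs_def by (rule foldr_append_carrier) (use ac in auto)
      moreover have "length (map \<alpha> [1..<xi+1]) * M = M + (xi - 1) * M" using xi1
        by (cases xi) auto
      ultimately show ?thesis by simp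
    qed
    have dUu: "dim_row Uu = m * L + (xi - 1) * (m * (L - n))" "dim_col Uu = M + (xi - 1) * M"
      unfolding Uu_def by (simp_all add: upart_dims M_def)
    have dUy: "dim_row Uy = p * L + (xi - 1) * (p * (L - n))" "dim_col Uy = M + (xi - 1) * M"
      unfolding Uy_def by (simp_all add: upart_dims M_def)
    have dY1: "dim_col (bdiag (hankel p L N y) (0\<^sub>m 0 ((xi - 1) * M))) = M + (xi - 1) * M"
      by (simp add: bdiag_dims hankel_def M_def)
    have dY2: "dim_col (bdiag (0\<^sub>m 0 M) (kron_id (xi - 1) (hankel p (L - n) (N - n) (subseq y n)))) = M + (xi - 1) * M"
      using NL LgE
      by (simp add: bdiag_dims hankel_def kron_id_def dim_diag_block_mat map_replicate sum_list_replicate M_def)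
    have big: "vstack (vstack Uu (bdiag (hankel p L N y) (0\<^sub>m 0 ((xi - 1) * M))))
         (bdiag (0\<^sub>m 0 M) (kron_id (xi - 1) (hankel p (L - n) (N - n) (subseq y n)))) *\<^sub>v S \<alpha>
       = (Uu *\<^sub>v S \<alpha>) @\<^sub>v (Uy *\<^sub>v S \<alpha>)"
    proof -
      have "vstack (vstack Uu (bdiag (hankel p L N y) (0\<^sub>m 0 ((xi - 1) * M))))
         (bdiag (0\<^sub>m 0 M) (kron_id (xi - 1) (hankel p (L - n) (N - n) (subseq y n)))) *\<^sub>v S \<alpha>
         = (vstack Uu (bdiag (hankel p L N y) (0\<^sub>m 0 ((xi - 1) * M))) *\<^sub>v S \<alpha>) @\<^sub>v
           (bdiag (0\<^sub>m 0 M) (kron_id (xi - 1) (hankel p (L - n) (N - n) (subseq y n))) *\<^sub>v S \<alpha>)"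
        by (rule vstack_mult) (use dY2 dUu Sc in \<open>simp_all add: vstack_dims\<close>)
      also have e2: "vstack Uu (bdiag (hankel p L N y) (0\<^sub>m 0 ((xi - 1) * M))) *\<^sub>v S \<alpha>
         = (Uu *\<^sub>v S \<alpha>) @\<^sub>v (bdiag (hankel p L N y) (0\<^sub>m 0 ((xi - 1) * M)) *\<^sub>v S \<alpha>)"
        by (rule vstack_mult) (use dY1 dUu Sc in simp_all)
      also have "((Uu *\<^sub>v S \<alpha>) @\<^sub>v (bdiag (hankel p L N y) (0\<^sub>m 0 ((xi - 1) * M)) *\<^sub>v S \<alpha>)) @\<^sub>v
           (bdiag (0\<^sub>m 0 M) (kron_id (xi - 1) (hankel p (L - n) (N - n) (subseq y n))) *\<^sub>v S \<alpha>)
         = (Uu *\<^sub>v S \<alpha>) @\<^sub>v ((bdiag (hankel p L N y) (0\<^sub>m 0 ((xi - 1) * M)) *\<^sub>v S \<alpha>) @\<^sub>v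
           (bdiag (0\<^sub>m 0 M) (kron_id (xi - 1) (hankel p (L - n) (N - n) (subseq y n))) *\<^sub>v S \<alpha>))"
        by (rule append_vec_assoc)
      also have "(bdiag (hankel p L N y) (0\<^sub>m 0 ((xi - 1) * M)) *\<^sub>v S \<alpha>) @\<^sub>v
           (bdiag (0\<^sub>m 0 M) (kron_id (xi - 1) (hankel p (L - n) (N - n) (subseq y n))) *\<^sub>v S \<alpha>) = Uy *\<^sub>v S \<alpha>"
        unfolding Uy_def by (rule vstack_mult[symmetric]) (use dY1 dY2 Sc in simp_all)
      finally show ?thesis .
    qed
    have Tm1: "T - 1 = L + (xi - 1) * (L - n) - 1" using T_eq by simp
    have cu: "Uu *\<^sub>v S \<alpha> \<in> carrier_vec (m * T)"
    proof -
      have g: "\<And>a b. m * (L + a * b) = m * L + a * (m * b)" by (simp add: distrib_left mult.left_commute)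
      have "m * L + (xi - 1) * (m * (L - n)) = m * T" unfolding T_eq g ..
      hence "dim_vec (Uu *\<^sub>v S \<alpha>) = m * T" using dUu(1) by simp
      thus ?thesis by (rule carrier_vecI)
    qed
    have cs: "stack m ubar 0 (T - 1) \<in> carrier_vec (m * T)" using T1 by (simp add: stack_def)
    have matpart: "(vstack (vstack Uu (bdiag (hankel p L N y) (0\<^sub>m 0 ((xi - 1) * M))))
         (bdiag (0\<^sub>m 0 M) (kron_id (xi - 1) (hankel p (L - n) (N - n) (subseq y n))))
       *\<^sub>v S \<alpha> = stack m ubar 0 (T - 1) @\<^sub>v stack p ybar 0 (T - 1)) \<longleftrightarrow>
       ((\<forall>k<L. \<forall>s<m. lc m M (\<alpha> 1) u k $ s = ubar k $ s) \<and>
        (\<forall>i<xi - 1. \<forall>k<L - n. \<forall>s<m. lc m M (\<alpha> (2 + i)) u (n + k) $ s = ubar (L + (i * (L - n) + k)) $ s)) \<and>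
       ((\<forall>k<L. \<forall>s<p. lc p M (\<alpha> 1) y k $ s = ybar k $ s) \<and>
        (\<forall>i<xi - 1. \<forall>k<L - n. \<forall>s<p. lc p M (\<alpha> (2 + i)) y (n + k) $ s = ybar (L + (i * (L - n) + k)) $ s))"
      unfolding big
      unfolding append_vec_eq[OF cu cs]
      unfolding Tm1 Uu_def Uy_def S_def M_def
      unfolding upart_eq[OF xi1 LgE NL L1 ac'] ..
    have ovpart: "(\<forall>i\<in>{1..xi - 1}.
          hankel m n (N - L + n) (subseq u (L - n)) *\<^sub>v \<alpha> i = hankel m n (N - L + n) u *\<^sub>v \<alpha> (i + 1) \<and>
          hankel p n (N - L + n) (subseq y (L - n)) *\<^sub>v \<alpha> i = hankel p n (N - L + n) y *\<^sub>v \<alpha> (i + 1))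
       \<longleftrightarrow> (\<forall>i\<in>{1..xi - 1}. \<forall>k<n. \<forall>s<m. lc m M (\<alpha> i) u (L - n + k) $ s = lc m M (\<alpha> (i + 1)) u k $ s) \<and>
           (\<forall>i\<in>{1..xi - 1}. \<forall>k<n. \<forall>s<p. lc p M (\<alpha> i) y (L - n + k) $ s = lc p M (\<alpha> (i + 1)) y k $ s)"
    proof -
      have "(\<forall>i\<in>{1..xi - 1}.
          hankel m n (N - L + n) (subseq u (L - n)) *\<^sub>v \<alpha> i = hankel m n (N - L + n) u *\<^sub>v \<alpha> (i + 1) \<and>
          hankel p n (N - L + n) (subseq y (L - n)) *\<^sub>v \<alpha> i = hankel p n (N - L + n) y *\<^sub>v \<alpha> (i + 1))
        \<longleftrightarrow> (\<forall>i\<in>{1..xi - 1}. (\<forall>k<n. \<forall>s<m. lc m M (\<alpha> i) u (L - n + k) $ s = lc m M (\<alpha> (i + 1)) u k $ s) \<and>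
           (\<forall>k<n. \<forall>s<p. lc p M (\<alpha> i) y (L - n + k) $ s = lc p M (\<alpha> (i + 1)) y k $ s))"
      proof (intro ball_cong refl)
        fix i assume i: "i \<in> {1..xi - 1}"
        have ai: "\<alpha> i \<in> carrier_vec (N - L + 1)" "\<alpha> (i + 1) \<in> carrier_vec (N - L + 1)"
          using ac' i by auto
        show "(hankel m n (N - L + n) (subseq u (L - n)) *\<^sub>v \<alpha> i = hankel m n (N - L + n) u *\<^sub>v \<alpha> (i + 1) \<and>
          hankel p n (N - L + n) (subseq y (L - n)) *\<^sub>v \<alpha> i = hankel p n (N - L + n) y *\<^sub>v \<alpha> (i + 1)) \<longleftrightarrow>
          ((\<forall>k<n. \<forall>s<m. lc m M (\<alpha> i) u (L - n + k) $ s = lc m M (\<alpha> (i + 1)) u k $ s) \<and>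
           (\<forall>k<n. \<forall>s<p. lc p M (\<alpha> i) y (L - n + k) $ s = lc p M (\<alpha> (i + 1)) y k $ s))"
          unfolding ov_eq[OF ai] M_def ..
      qed
      thus ?thesis by blast
    qed
    have wu: "((\<forall>k<L. \<forall>s<m. lc m M (\<alpha> 1) u k $ s = ubar k $ s) \<and>
        (\<forall>i<xi - 1. \<forall>k<L - n. \<forall>s<m. lc m M (\<alpha> (2 + i)) u (n + k) $ s = ubar (L + (i * (L - n) + k)) $ s) \<and>
        (\<forall>i\<in>{1..xi - 1}. \<forall>k<n. \<forall>s<m. lc m M (\<alpha> i) u (L - n + k) $ s = lc m M (\<alpha> (i + 1)) u k $ s))
       \<longleftrightarrow> (\<forall>i\<in>{1..xi}. \<forall>k<L. \<forall>s<m. ubar ((i - 1) * (L - n) + k) $ s = lc m M (\<alpha> i) u k $ s)"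
      by (rule win_equiv[OF LgE xi1, where g = "\<lambda>i k. lc m M (\<alpha> i) u k"])
    have wy: "((\<forall>k<L. \<forall>s<p. lc p M (\<alpha> 1) y k $ s = ybar k $ s) \<and>
        (\<forall>i<xi - 1. \<forall>k<L - n. \<forall>s<p. lc p M (\<alpha> (2 + i)) y (n + k) $ s = ybar (L + (i * (L - n) + k)) $ s) \<and>
        (\<forall>i\<in>{1..xi - 1}. \<forall>k<n. \<forall>s<p. lc p M (\<alpha> i) y (L - n + k) $ s = lc p M (\<alpha> (i + 1)) y k $ s))
       \<longleftrightarrow> (\<forall>i\<in>{1..xi}. \<forall>k<L. \<forall>s<p. ybar ((i - 1) * (L - n) + k) $ s = lc p M (\<alpha> i) y k $ s)"
      by (rule win_equiv[OF LgE xi1, where g = "\<lambda>i k. lc p M (\<alpha> i) y k"])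
    have wv: "Win \<alpha> \<longleftrightarrow> (\<forall>i\<in>{1..xi}. \<forall>k<L. \<forall>s<m. ubar ((i - 1) * (L - n) + k) $ s = lc m M (\<alpha> i) u k $ s) \<and>
        (\<forall>i\<in>{1..xi}. \<forall>k<L. \<forall>s<p. ybar ((i - 1) * (L - n) + k) $ s = lc p M (\<alpha> i) y k $ s)"
    proof -
      have cmp: "(ubar ((i - 1) * (L - n) + k) = lc m M (\<alpha> i) u k \<longleftrightarrow>
            (\<forall>s<m. ubar ((i - 1) * (L - n) + k) $ s = lc m M (\<alpha> i) u k $ s)) \<and>
          (ybar ((i - 1) * (L - n) + k) = lc p M (\<alpha> i) y k \<longleftrightarrow>
            (\<forall>s<p. ybar ((i - 1) * (L - n) + k) $ s = lc p M (\<alpha> i) y k $ s))"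
        if i: "i \<in> {1..xi}" and k: "k < L" for i k
      proof -
        have le: "(i - 1) * (L - n) \<le> (xi - 1) * (L - n)" using i by (intro mult_le_mono1) auto
        have lt: "(i - 1) * (L - n) + k < T" unfolding T_eq using le k by linarith
        have c1: "ubar ((i - 1) * (L - n) + k) \<in> carrier_vec m" using ubar_dim lt unfolding T_def by auto
        have c2: "ybar ((i - 1) * (L - n) + k) \<in> carrier_vec p" using ybar_dim lt unfolding T_def by auto
        show ?thesis using c1 c2 by (auto simp: vec_eq_iff)
      qed
      show ?thesis unfolding Win_def using cmp by blast
    qed
    show ?thesis unfolding matpart ovpart wv wu[symmetric] wy[symmetric] by blast
  qed
  have "is_trajectory n m p A B C D T ubar ybar \<longleftrightarrow>
    (\<exists>\<alpha> :: nat \<Rightarrow> real vec. (\<forall>i\<in>{1..xi}. \<alpha> i \<in> carrier_vec M) \<and>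
       (vstack (vstack Uu (bdiag (hankel p L N y) (0\<^sub>m 0 ((xi - 1) * M))))
         (bdiag (0\<^sub>m 0 M) (kron_id (xi - 1) (hankel p (L - n) (N - n) (subseq y n))))
       *\<^sub>v S \<alpha> = stack m ubar 0 (T - 1) @\<^sub>v stack p ybar 0 (T - 1) \<and>
       (\<forall>i\<in>{1..xi - 1}.
          hankel m n (N - L + n) (subseq u (L - n)) *\<^sub>v \<alpha> i = hankel m n (N - L + n) u *\<^sub>v \<alpha> (i + 1) \<and>
          hankel p n (N - L + n) (subseq y (L - n)) *\<^sub>v \<alpha> i = hankel p n (N - L + n) y *\<^sub>v \<alpha> (i + 1))))"
  proof -
    have "(\<exists>\<alpha>. (\<forall>i\<in>{1..xi}. \<alpha> i \<in> carrier_vec M) \<and> Win \<alpha>) \<longleftrightarrow>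
    (\<exists>\<alpha> :: nat \<Rightarrow> real vec. (\<forall>i\<in>{1..xi}. \<alpha> i \<in> carrier_vec M) \<and>
       (vstack (vstack Uu (bdiag (hankel p L N y) (0\<^sub>m 0 ((xi - 1) * M))))
         (bdiag (0\<^sub>m 0 M) (kron_id (xi - 1) (hankel p (L - n) (N - n) (subseq y n))))
       *\<^sub>v S \<alpha> = stack m ubar 0 (T - 1) @\<^sub>v stack p ybar 0 (T - 1) \<and>
       (\<forall>i\<in>{1..xi - 1}.
          hankel m n (N - L + n) (subseq u (L - n)) *\<^sub>v \<alpha> i = hankel m n (N - L + n) u *\<^sub>v \<alpha> (i + 1) \<and>
          hankel p n (N - L + n) (subseq y (L - n)) *\<^sub>v \<alpha> i = hankel p n (N - L + n) y *\<^sub>v \<alpha> (i + 1))))"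
    proof (rule ex_cong1)
      fix \<alpha> :: "nat \<Rightarrow> real vec"
      show "((\<forall>i\<in>{1..xi}. \<alpha> i \<in> carrier_vec M) \<and> Win \<alpha>) \<longleftrightarrow> ((\<forall>i\<in>{1..xi}. \<alpha> i \<in> carrier_vec M) \<and>
       (vstack (vstack Uu (bdiag (hankel p L N y) (0\<^sub>m 0 ((xi - 1) * M))))
         (bdiag (0\<^sub>m 0 M) (kron_id (xi - 1) (hankel p (L - n) (N - n) (subseq y n))))
       *\<^sub>v S \<alpha> = stack m ubar 0 (T - 1) @\<^sub>v stack p ybar 0 (T - 1) \<and>
       (\<forall>i\<in>{1..xi - 1}.
          hankel m n (N - L + n) (subseq u (L - n)) *\<^sub>v \<alpha> i = hankel m n (N - L + n) u *\<^sub>v \<alpha> (i + 1) \<and>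
          hankel p n (N - L + n) (subseq y (L - n)) *\<^sub>v \<alpha> i = hankel p n (N - L + n) y *\<^sub>v \<alpha> (i + 1))))"
      proof (rule conj_cong[OF refl])
        assume c: "\<forall>i\<in>{1..xi}. \<alpha> i \<in> carrier_vec M"
        show "Win \<alpha> = (vstack (vstack Uu (bdiag (hankel p L N y) (0\<^sub>m 0 ((xi - 1) * M))))
         (bdiag (0\<^sub>m 0 M) (kron_id (xi - 1) (hankel p (L - n) (N - n) (subseq y n))))
       *\<^sub>v S \<alpha> = stack m ubar 0 (T - 1) @\<^sub>v stack p ybar 0 (T - 1) \<and>
       (\<forall>i\<in>{1..xi - 1}.
          hankel m n (N - L + n) (subseq u (L - n)) *\<^sub>v \<alpha> i = hankel m n (N - L + n) u *\<^sub>v \<alpha> (i + 1) \<and>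
          hankel p n (N - L + n) (subseq y (L - n)) *\<^sub>v \<alpha> i = hankel p n (N - L + n) y *\<^sub>v \<alpha> (i + 1)))"
          using key[OF c] by (rule sym)
      qed
    qed
    with LHS show ?thesis by (rule trans)
  qed
  thus ?thesis unfolding T_def Uu_def S_def M_def .
qed

end
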